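(* Let $p$ be a prime, $k, r \geq 1$ with $p \geq r+1$, and let $G_j = \mathbb{F}_p^{n_j}$ for $j \in [k]$, $G^{\oplus} = G_1 \oplus \cdots \oplus G_k$. Let $\psi \colon (G^{\oplus})^{r-1} \times G_1 \times \cdots \times G_k \to \mathbb{F}_p$ be a multilinear form such that (i) for all $i < j$ in $[r-1]$, $\psi(a^{(1)}, \dots, a^{(r-1)}, d_1, \dots, d_k) = \psi(\tilde a^{(1)}, \dots, \tilde a^{(r-1)}, d_1, \dots, d_k)$ identically, where $(\tilde a^{(\ell)})$ is obtained from $(a^{(\ell)})$ by swapping $a^{(i)}$ and $a^{(j)}$; and (ii) for all $i \in [r-1]$, $j \in [k]$, all $a^{(\ell)} \in G^{\oplus}$ ($\ell \neq i$), $u_j \in G_j$ and $d_1 \in G_1, \dots, d_k \in G_k$, \[\psi(a^{(1)}, \dots, a^{(i-1)}, \iota_j(u_j), a^{(i+1)}, \dots, a^{(r-1)}, d_1, \dots, d_k) = \psi(a^{(1)}, \dots, a^{(i-1)}, \iota_j(d_j), a^{(i+1)}, \dots, a^{(r-1)}, d_1, \dots, d_{j-1}, u_j, d_{j+1}, \dots, d_k),\] where $\iota_j(u) \in G^{\oplus}$ has $j$-th component $u$ and all others $0$. Then there exist a polynomial $P \in \mathcal{P}_{k,r}$ and a polynomial $Q$ in the coordinates of $a^{(1)}, \dots, a^{(r-1)} \in G^{\oplus}$ and $x_1 \in G_1, \dots, x_k \in G_k$ such that for all $a^{(1)}, \dots, a^{(r-1)} \in G^{\oplus}$ and $x = (x_1,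 \dots, x_k) \in G^{\oplus}$, \[\psi(a^{(1)}, \dots, a^{(r-1)}, x_1, \dots, x_k) = \Delta_{a^{(1)}} \cdots \Delta_{a^{(r-1)}} P(x) + Q(a^{(1)}, \dots, a^{(r-1)}, x_1, \dots, x_k),\] and for every monomial $m$ appearing in $Q$ there is $i \in [k]$ such that none of the variables $x_{i,c}$, $c \in [n_i]$, appears in $m$.
   Context: For $x \in G^{\oplus}$ write $x_{j,c}$ ($j \in [k]$, $c \in [n_j]$) for its coordinates, $x_{j,c}$ being the $c$-th coordinate of the $G_j$-component $x_j$. $\mathcal{P}_{k,r}$ is the set of polynomials $G^{\oplus} \to \mathbb{F}_p$ that are $\mathbb{F}_p$-linear combinations of monomials $x_{d_1,c_1} x_{d_2,c_2} \cdots x_{d_{k+r-1},c_{k+r-1}}$ (repetitions allowed) such that every $i \in [k]$ occurs among $d_1, \dots, d_{k+r-1}$. For $F \colon G^{\oplus} \to \mathbb{F}_p$ and $h \in G^{\oplus}$, $\Delta_h F(x) = F(x+h) - F(x)$. *)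

theory Defs
  imports Main "HOL-Library.Multiset" "HOL-Computational_Algebra.Primes"
begin

text \<open>Conventions (0-based indices): a point of G_sum = G_1 + ... + G_k is a function
  x :: nat * nat => 'f, where x (j,c) is the c-th coordinate of the j-th component,
  j < k, c < n j; all other values are 0.  An element of G_j is u :: nat => 'f with
  u c = 0 for c >= n j.\<close>

definition idx :: "nat \<Rightarrow> (nat \<Rightarrow> nat) \<Rightarrow> (nat \<times> nat) set" where
  "idx k n = {(j, c). j < k \<and> c < n j}"

definition Gsum :: "nat \<Rightarrow> (nat \<Rightarrow> nat) \<Rightarrow> (nat \<times> nat \<Rightarrow> 'f::zero) set" where
  "Gsum k n = {x. \<forall>v. v \<notin> idx k n \<longrightarrow> x v = 0}"

definition Gcomp :: "(nat \<Rightarrow> nat) \<Rightarrow> nat \<Rightarrow> (nat \<Rightarrow> 'f::zero) set" where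
  "Gcomp n j = {u. \<forall>c. n j \<le> c \<longrightarrow> u c = 0}"

definition addp :: "('a \<Rightarrow> 'f::plus) \<Rightarrow> ('a \<Rightarrow> 'f) \<Rightarrow> 'a \<Rightarrow> 'f" where
  "addp x y = (\<lambda>v. x v + y v)"

definition smul :: "'f::times \<Rightarrow> ('a \<Rightarrow> 'f) \<Rightarrow> 'a \<Rightarrow> 'f" where
  "smul s x = (\<lambda>v. s * x v)"

definition iota :: "(nat \<Rightarrow> nat) \<Rightarrow> nat \<Rightarrow> (nat \<Rightarrow> 'f::zero) \<Rightarrow> nat \<times> nat \<Rightarrow> 'f" where
  "iota n j u = (\<lambda>(j', c). if j' = j \<and> c < n j then u c else 0)"

definition comp :: "(nat \<times> nat \<Rightarrow> 'f) \<Rightarrow> nat \<Rightarrow> nat \<Rightarrow> 'f" where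
  "comp x j = (\<lambda>c. x (j, c))"

definition setcomp :: "(nat \<Rightarrow> nat) \<Rightarrow> (nat \<times> nat \<Rightarrow> 'f::zero) \<Rightarrow> nat \<Rightarrow> (nat \<Rightarrow> 'f)
    \<Rightarrow> nat \<times> nat \<Rightarrow> 'f" where
  "setcomp n x j u = (\<lambda>(j', c). if j' = j then (if c < n j then u c else 0) else x (j', c))"

text \<open>The first r-1 arguments are a list
  of length r-1 of points of G_sum; the arguments d_1,...,d_k are packed into one point d of
  G_sum (d_j = comp d j).\<close>
definition multilinear_form ::
  "nat \<Rightarrow> (nat \<Rightarrow> nat) \<Rightarrow> nat \<Rightarrow> ((nat \<times> nat \<Rightarrow> 'f::field) list \<Rightarrow> (nat \<times> nat \<Rightarrow> 'f) \<Rightarrow> 'f) \<Rightarrow> bool" where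
  "multilinear_form k n r \<psi> \<longleftrightarrow>
     (\<forall>a d i u v s. set a \<subseteq> Gsum k n \<and> length a = r - 1 \<and> d \<in> Gsum k n \<and> i < r - 1
        \<and> u \<in> Gsum k n \<and> v \<in> Gsum k n \<longrightarrow>
          \<psi> (a[i := addp u v]) d = \<psi> (a[i := u]) d + \<psi> (a[i := v]) d
        \<and> \<psi> (a[i := smul s u]) d = s * \<psi> (a[i := u]) d)
   \<and> (\<forall>a d j u v s. set a \<subseteq> Gsum k n \<and> length a = r - 1 \<and> d \<in> Gsum k n \<and> j < k
        \<and> u \<in> Gcomp n j \<and> v \<in> Gcomp n j \<longrightarrow>
          \<psi> a (setcomp n d j (addp u v)) = \<psi> a (setcomp n d j u) + \<psi> a (setcomp n d j v)
        \<and> \<psi> a (setcomp n d j (smul s u)) = s * \<psi> a (setcomp n d j u))"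

text \<open>Formal polynomials: finitely supported coefficient functions on monomials, a monomial
  being a multiset of variables (repetitions allowed).\<close>
definition is_poly :: "('v multiset \<Rightarrow> 'f::zero) \<Rightarrow> bool" where
  "is_poly cf \<longleftrightarrow> finite {m. cf m \<noteq> 0}"

definition poly_eval :: "('v multiset \<Rightarrow> 'f::comm_ring_1) \<Rightarrow> ('v \<Rightarrow> 'f) \<Rightarrow> 'f" where
  "poly_eval cf x = (\<Sum>m\<in>{m. cf m \<noteq> 0}. cf m * prod_mset (image_mset x m))"

definition in_Pkr :: "nat \<Rightarrow> (nat \<Rightarrow> nat) \<Rightarrow> nat \<Rightarrow> ((nat \<times> nat) multiset \<Rightarrow> 'f::zero) \<Rightarrow> bool" where
  "in_Pkr k n r cf \<longleftrightarrow> is_poly cf \<and>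
     (\<forall>m. cf m \<noteq> 0 \<longrightarrow> size m = k + r - 1 \<and> set_mset m \<subseteq> idx k n
        \<and> (\<forall>i<k. \<exists>c. (i, c) \<in># m))"

definition Delta :: "(nat \<times> nat \<Rightarrow> 'f::ab_group_add) \<Rightarrow> ((nat \<times> nat \<Rightarrow> 'f) \<Rightarrow> 'f) \<Rightarrow> (nat \<times> nat \<Rightarrow> 'f) \<Rightarrow> 'f" where
  "Delta h F = (\<lambda>x. F (addp x h) - F x)"

definition Deltas :: "(nat \<times> nat \<Rightarrow> 'f::ab_group_add) list \<Rightarrow> ((nat \<times> nat \<Rightarrow> 'f) \<Rightarrow> 'f) \<Rightarrow> (nat \<times> nat \<Rightarrow> 'f) \<Rightarrow> 'f" where
  "Deltas hs F = foldr Delta hs F"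

text \<open>Variables of Q: Inl (l, j, c) is the coordinate (j,c) of a^(l) (l < r-1);
  Inr (j, c) is the coordinate c of x_j.\<close>
definition Qvar_ok :: "nat \<Rightarrow> (nat \<Rightarrow> nat) \<Rightarrow> nat \<Rightarrow> (nat \<times> nat \<times> nat) + (nat \<times> nat) \<Rightarrow> bool" where
  "Qvar_ok k n r v = (case v of Inl (l, j, c) \<Rightarrow> l < r - 1 \<and> (j, c) \<in> idx k n
                               | Inr (j, c) \<Rightarrow> (j, c) \<in> idx k n)"

definition Qassign :: "(nat \<times> nat \<Rightarrow> 'f) list \<Rightarrow> (nat \<times> nat \<Rightarrow> 'f) \<Rightarrow> (nat \<times> nat \<times> nat) + (nat \<times> nat) \<Rightarrow> 'f" where
  "Qassign a x v = (case v of Inl (l, j, c) \<Rightarrow> (a ! l) (j, c) | Inr (j, c) \<Rightarrow> x (j, c))"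

end

theory Submission
  imports Defs "HOL-Number_Theory.Residues" "HOL-Library.Function_Algebras"
begin


lemma sum_fun_apply: "(sum f I) x = sum (\<lambda>i. f i x) I"
  by (induction I rule: infinite_finite_induct) auto

lemma addp_eq: "addp x y = x + y" by (simp add: addp_def fun_eq_iff)

lemma finite_idx: "finite (idx k n)"
proof -
  have "idx k n \<subseteq> (\<Union>j<k. {j} \<times> {..<n j})" by (auto simp: idx_def)
  then show ?thesis by (rule finite_subset) auto
qed

lemma Gsum_add: "(x::nat\<times>nat\<Rightarrow>'f::comm_monoid_add) \<in> Gsum k n \<Longrightarrow> y \<in> Gsum k n \<Longrightarrow> x + y \<in> Gsum k n"
  by (simp add: Gsum_def)
lemma Gsum_zero: "(0::nat\<times>nat\<Rightarrow>'f::zero) \<in> Gsum k n" by (simp add: Gsum_def)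
lemma Gsum_uminus: "(x::nat\<times>nat\<Rightarrow>'f::ab_group_add) \<in> Gsum k n \<Longrightarrow> - x \<in> Gsum k n" by (simp add: Gsum_def)
lemma Gsum_diff: "(x::nat\<times>nat\<Rightarrow>'f::ab_group_add) \<in> Gsum k n \<Longrightarrow> y \<in> Gsum k n \<Longrightarrow> x - y \<in> Gsum k n"
  by (simp add: Gsum_def)
lemma Gsum_smul: "(x::nat\<times>nat\<Rightarrow>'f::ring) \<in> Gsum k n \<Longrightarrow> smul a x \<in> Gsum k n" by (simp add: Gsum_def smul_def)
lemma Gsum_sum: "(\<And>i. i \<in> I \<Longrightarrow> (f i :: nat\<times>nat\<Rightarrow>'f::comm_monoid_add) \<in> Gsum k n) \<Longrightarrow> sum f I \<in> Gsum k n"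
  by (induction I rule: infinite_finite_induct) (auto simp: Gsum_zero Gsum_add)

lemma setcomp_in: "x \<in> Gsum k n \<Longrightarrow> j < k \<Longrightarrow> setcomp n x j u \<in> Gsum k n"
  by (auto simp: Gsum_def setcomp_def idx_def)
lemma iota_in: "j < k \<Longrightarrow> iota n j u \<in> Gsum k n"
  by (auto simp: Gsum_def iota_def idx_def)
lemma comp_Gcomp: "x \<in> Gsum k n \<Longrightarrow> comp x j \<in> Gcomp n j"
  by (auto simp: Gsum_def Gcomp_def comp_def idx_def)
lemma setcomp_comp: "x \<in> Gsum k n \<Longrightarrow> setcomp n x j (comp x j) = x"
  by (auto simp: Gsum_def setcomp_def comp_def idx_def fun_eq_iff)
lemma setcomp_setcomp: "setcomp n (setcomp n x j u) j v = setcomp n x j v"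
  by (auto simp: setcomp_def fun_eq_iff)
lemma setcomp_commute: "i \<noteq> j \<Longrightarrow> setcomp n (setcomp n x i u) j v = setcomp n (setcomp n x j v) i u"
  by (auto simp: setcomp_def fun_eq_iff)
lemma comp_setcomp_same: "u \<in> Gcomp n j \<Longrightarrow> comp (setcomp n x j u) j = u"
  by (auto simp: setcomp_def comp_def Gcomp_def fun_eq_iff)
lemma comp_setcomp_other: "i \<noteq> j \<Longrightarrow> comp (setcomp n x j u) i = comp x i"
  by (auto simp: setcomp_def comp_def fun_eq_iff)
lemma decomp1: "(x::nat\<times>nat\<Rightarrow>'f::comm_monoid_add) \<in> Gsum k n \<Longrightarrow> x = setcomp n x j 0 + iota n j (comp x j)"
  by (auto simp: Gsum_def setcomp_def comp_def iota_def idx_def fun_eq_iff)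
lemma comp_add: "comp (x + y) j = addp (comp x j) (comp y j)"
  by (simp add: comp_def addp_def)
lemma comp_smul: "comp (smul a x) j = smul a (comp x j)"
  by (simp add: comp_def smul_def)
lemma iota_add: "iota n j (addp (u::nat\<Rightarrow>'f::monoid_add) v) = iota n j u + iota n j v"
  by (auto simp: iota_def addp_def fun_eq_iff)
lemma iota_smul: "iota n j (smul a (u::nat\<Rightarrow>'f::ring)) = smul a (iota n j u)"
  by (auto simp: iota_def smul_def fun_eq_iff)
lemma iota_apply_other: "j' \<noteq> j \<Longrightarrow> iota n j u (j', c) = 0"
  by (simp add: iota_def)

lemma decomp_all: "(x::nat\<times>nat\<Rightarrow>'f::comm_monoid_add) \<in> Gsum k n \<Longrightarrow> x = (\<Sum>j<k. iota n j (comp x j))"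
proof (rule ext)
  fix v :: "nat \<times> nat"
  assume x: "x \<in> Gsum k n"
  obtain j c where v: "v = (j, c)" by fastforce
  show "x v = (\<Sum>j<k. iota n j (comp x j)) v"
  proof (cases "j < k")
    case True
    have "(\<Sum>j'<k. iota n j' (comp x j')) v = (\<Sum>j'\<in>{j}. iota n j' (comp x j') (j, c))"
      unfolding sum_fun_apply v
      by (rule sum.mono_neutral_right) (auto simp: True iota_def)
    also have "\<dots> = x v" using x True by (auto simp: iota_def comp_def v Gsum_def idx_def)
    finally show ?thesis by simp
  next
    case False
    then show ?thesis using x by (auto simp: sum_fun_apply iota_def v Gsum_def idx_def)
  qed
qed

context
  fixes k :: nat and n :: "nat \<Rightarrow> nat" and r :: nat
    and \<psi> :: "(nat \<times> nat \<Rightarrow> 'f::field) list \<Rightarrow> (nat \<times> nat \<Rightarrow> 'f) \<Rightarrow> 'f"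
  assumes ml: "multilinear_form k n r \<psi>"
begin

lemma ml_slot_add:
  assumes "set a \<subseteq> Gsum k n" "length a = r - 1" "d \<in> Gsum k n" "i < r - 1"
    "u \<in> Gsum k n" "v \<in> Gsum k n"
  shows "\<psi> (a[i := u + v]) d = \<psi> (a[i:=u]) d + \<psi> (a[i:=v]) d"
  using ml assms unfolding multilinear_form_def addp_eq by blast

lemma ml_slot_smul:
  assumes "set a \<subseteq> Gsum k n" "length a = r - 1" "d \<in> Gsum k n" "i < r - 1"
    "u \<in> Gsum k n"
  shows "\<psi> (a[i := smul s u]) d = s * \<psi> (a[i:=u]) d"
  using ml assms unfolding multilinear_form_def by blast

lemma ml_slot_zero:
  assumes "set a \<subseteq> Gsum k n" "length a = r - 1" "d \<in> Gsum k n" "i < r - 1"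
  shows "\<psi> (a[i := 0]) d = 0"
proof -
  have "smul 0 (0::nat\<times>nat\<Rightarrow>'f) = 0" by (simp add: smul_def fun_eq_iff)
  then show ?thesis using ml_slot_smul[OF assms Gsum_zero, of 0] by simp
qed

lemma ml_slot_diff:
  assumes "set a \<subseteq> Gsum k n" "length a = r - 1" "d \<in> Gsum k n" "i < r - 1"
    "u \<in> Gsum k n" "v \<in> Gsum k n"
  shows "\<psi> (a[i := u - v]) d = \<psi> (a[i:=u]) d - \<psi> (a[i:=v]) d"
proof -
  have "\<psi> (a[i := (u - v) + v]) d = \<psi> (a[i:=u - v]) d + \<psi> (a[i:=v]) d"
    using assms by (intro ml_slot_add) (auto simp: Gsum_diff)
  then show ?thesis by simp
qed

lemma ml_slot_sum:
  assumes "set a \<subseteq> Gsum k n" "length a = r - 1" "d \<in> Gsum k n" "i < r - 1"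
    "finite I" "\<And>t. t \<in> I \<Longrightarrow> f t \<in> Gsum k n"
  shows "\<psi> (a[i := \<Sum>t\<in>I. f t]) d = (\<Sum>t\<in>I. \<psi> (a[i := f t]) d)"
  using assms(5,6)
proof (induction I rule: finite_induct)
  case empty
  show ?case unfolding sum.empty by (rule ml_slot_zero[OF assms(1-4)])
next
  case (insert x F)
  have "\<psi> (a[i := sum f (insert x F)]) d = \<psi> (a[i := f x + sum f F]) d"
    by (simp only: sum.insert[OF insert(1,2)])
  also have "\<dots> = \<psi> (a[i := f x]) d + \<psi> (a[i := sum f F]) d"
    using insert by (intro ml_slot_add[OF assms(1-4)] Gsum_sum) auto
  finally have calc: "\<psi> (a[i := sum f (insert x F)]) d = \<psi> (a[i := f x]) d + \<psi> (a[i := sum f F]) d" .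
  have ih: "\<psi> (a[i:=sum f F]) d = (\<Sum>t\<in>F. \<psi> (a[i := f t]) d)" using insert by auto
  show ?case unfolding calc ih by (simp only: sum.insert[OF insert(1,2)])
qed

lemma ml_d_add:
  assumes "set a \<subseteq> Gsum k n" "length a = r - 1" "d \<in> Gsum k n" "j < k"
    "u \<in> Gcomp n j" "v \<in> Gcomp n j"
  shows "\<psi> a (setcomp n d j (addp u v)) = \<psi> a (setcomp n d j u) + \<psi> a (setcomp n d j v)"
  using ml assms unfolding multilinear_form_def by blast

lemma ml_d_smul:
  assumes "set a \<subseteq> Gsum k n" "length a = r - 1" "d \<in> Gsum k n" "j < k"
    "u \<in> Gcomp n j"
  shows "\<psi> a (setcomp n d j (smul s u)) = s * \<psi> a (setcomp n d j u)"
  using ml assms unfolding multilinear_form_def by blast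

lemma ml_d_zero:
  assumes "set a \<subseteq> Gsum k n" "length a = r - 1" "d \<in> Gsum k n" "j < k"
  shows "\<psi> a (setcomp n d j 0) = 0"
proof -
  have z: "(0::nat\<Rightarrow>'f) \<in> Gcomp n j" by (simp add: Gcomp_def)
  have "smul 0 (0::nat\<Rightarrow>'f) = 0" by (simp add: smul_def fun_eq_iff)
  then show ?thesis using ml_d_smul[OF assms z, of 0] by simp
qed

end


lemma Delta_apply: "Delta h F y = F (y + h) - F y"
  by (simp add: Delta_def addp_eq)
lemma Deltas_Nil[simp]: "Deltas [] F = F" by (simp add: Deltas_def)
lemma Deltas_Cons: "Deltas (h # hs) F = Delta h (Deltas hs F)" by (simp add: Deltas_def)
lemma Deltas_append: "Deltas (xs @ ys) F = Deltas xs (Deltas ys F)" by (simp add: Deltas_def)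

lemma Deltas_cong:
  fixes F F' :: "(nat \<times> nat \<Rightarrow> 'f::ab_group_add) \<Rightarrow> 'f"
  assumes "set hs \<subseteq> Gsum k n" "y \<in> Gsum k n" "\<And>z. z \<in> Gsum k n \<Longrightarrow> F z = F' z"
  shows "Deltas hs F y = Deltas hs F' y"
  using assms(1,2)
proof (induction hs arbitrary: y)
  case Nil then show ?case using assms(3) by simp
next
  case (Cons h hs)
  then show ?case by (simp add: Deltas_Cons Delta_apply Gsum_add)
qed

lemma Deltas_add: "Deltas hs (\<lambda>y. F y + F' y) = (\<lambda>y. Deltas hs F y + Deltas hs F' y)"
  by (induction hs) (auto simp: Deltas_Cons Delta_apply fun_eq_iff algebra_simps)
lemma Deltas_diff: "Deltas hs (\<lambda>y. F y - F' y) = (\<lambda>y. Deltas hs F y - Deltas hs F' y)"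
  by (induction hs) (auto simp: Deltas_Cons Delta_apply fun_eq_iff algebra_simps)
lemma Deltas_scale: "Deltas hs (\<lambda>y. (a::'f::ring) * F y) = (\<lambda>y. a * Deltas hs F y)"
  by (induction hs) (auto simp: Deltas_Cons Delta_apply fun_eq_iff algebra_simps)
lemma Deltas_zero: "Deltas hs (\<lambda>y. 0::'f::ab_group_add) = (\<lambda>y. 0)"
  by (induction hs) (auto simp: Deltas_Cons Delta_apply fun_eq_iff)
lemma Deltas_sum: "Deltas hs (\<lambda>y. \<Sum>i\<in>I. F i y) = (\<lambda>y. \<Sum>i\<in>I. Deltas hs (F i) y)"
  by (induction hs) (auto simp: Deltas_Cons Delta_apply fun_eq_iff sum_subtractf)

section \<open>The operator W\<close>

primrec W :: "nat \<Rightarrow> (nat \<Rightarrow> nat) \<Rightarrow> ((nat \<times> nat \<Rightarrow> 'f::ab_group_add) \<Rightarrow> 'f) \<Rightarrow> (nat \<times> nat \<Rightarrow> 'f) \<Rightarrow> 'f" where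
  "W 0 n g = g"
| "W (Suc j) n g = (\<lambda>x. W j n g x - W j n g (setcomp n x j 0))"

lemma setcomp0_in: "x \<in> Gsum k n \<Longrightarrow> setcomp n x j (0::nat\<Rightarrow>'f::zero) \<in> Gsum k n"
  by (auto simp: Gsum_def setcomp_def idx_def)

lemma W_cong:
  fixes g g' :: "(nat \<times> nat \<Rightarrow> 'f::ab_group_add) \<Rightarrow> 'f"
  assumes "\<And>z. z \<in> Gsum k n \<Longrightarrow> g z = g' z"
  shows "x \<in> Gsum k n \<Longrightarrow> W j n g x = W j n g' x"
  by (induction j arbitrary: x) (auto simp: assms setcomp0_in)

lemma W_add: "W j n (\<lambda>y. f y + g y) = (\<lambda>x. W j n f x + W j n g x)"
  by (induction j) (auto simp: fun_eq_iff algebra_simps)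
lemma W_diff: "W j n (\<lambda>y. f y - g y) = (\<lambda>x. W j n f x - W j n g x)"
  by (induction j) (auto simp: fun_eq_iff algebra_simps)
lemma W_scale: "W j n (\<lambda>y. (a::'f::ring) * f y) = (\<lambda>x. a * W j n f x)"
  by (induction j) (auto simp: fun_eq_iff algebra_simps)
lemma W_sum: "W j n (\<lambda>y. \<Sum>i\<in>I. f i y) = (\<lambda>x. \<Sum>i\<in>I. W j n (f i) x)"
  by (induction j) (auto simp: fun_eq_iff sum_subtractf)

lemma W_decomp: "g x = W k n g x + (\<Sum>j<k. W j n g (setcomp n x j 0))"
proof (induction k)
  case 0 then show ?case by simp
next
  case (Suc k)
  have e: "(\<Sum>j<Suc k. W j n g (setcomp n x j 0)) = (\<Sum>j<k. W j n g (setcomp n x j 0)) + W k n g (setcomp n x k 0)"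
    by (rule sum.lessThan_Suc)
  have c: "(W k n g x - W k n g (setcomp n x k 0)) + ((\<Sum>j<k. W j n g (setcomp n x j 0)) + W k n g (setcomp n x k 0))
     = W k n g x + (\<Sum>j<k. W j n g (setcomp n x j 0))" by (simp add: algebra_simps)
  show ?case unfolding e W.simps c by (rule Suc.IH)
qed

lemma W_fixed:
  fixes g :: "(nat \<times> nat \<Rightarrow> 'f::ab_group_add) \<Rightarrow> 'f"
  assumes "\<And>j z. j < k \<Longrightarrow> z \<in> Gsum k n \<Longrightarrow> g (setcomp n z j 0) = 0"
  shows "j \<le> k \<Longrightarrow> x \<in> Gsum k n \<Longrightarrow> W j n g x = g x"
proof (induction j arbitrary: x)
  case 0 then show ?case by simp
next
  case (Suc j)
  then have "W j n g (setcomp n x j 0) = g (setcomp n x j 0)" by (simp add: setcomp0_in)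
  also have "\<dots> = 0" using assms Suc by simp
  finally show ?case using Suc by simp
qed

primrec Lx :: "(nat \<Rightarrow> nat) \<Rightarrow> nat \<Rightarrow> (nat \<times> nat \<Rightarrow> 'f::zero) \<Rightarrow> (nat \<times> nat \<Rightarrow> 'f) list" where
  "Lx n 0 x = []"
| "Lx n (Suc j) x = iota n j (comp x j) # Lx n j x"

primrec zb :: "(nat \<Rightarrow> nat) \<Rightarrow> nat \<Rightarrow> (nat \<times> nat \<Rightarrow> 'f::zero) \<Rightarrow> (nat \<times> nat \<Rightarrow> 'f)" where
  "zb n 0 x = x"
| "zb n (Suc j) x = setcomp n (zb n j x) j 0"

lemma length_Lx[simp]: "length (Lx n j x) = j" by (induction j) auto
lemma Lx_in: "j \<le> k \<Longrightarrow> set (Lx n j x) \<subseteq> Gsum k n"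
  by (induction j) (auto simp: iota_in)
lemma zb_in: "x \<in> Gsum k n \<Longrightarrow> zb n j x \<in> Gsum k n"
  by (induction j) (auto simp: setcomp0_in)
lemma Lx_setcomp: "j \<le> i \<Longrightarrow> Lx n j (setcomp n x i u) = Lx n j x"
  by (induction j) (auto simp: comp_setcomp_other)
lemma zb_setcomp: "j \<le> i \<Longrightarrow> zb n j (setcomp n x i u) = setcomp n (zb n j x) i u"
  by (induction j) (auto simp: setcomp_commute)
lemma comp_zb: "j \<le> i \<Longrightarrow> comp (zb n j x) i = comp x i"
  by (induction j) (auto simp: comp_setcomp_other)

lemma W_Deltas:
  fixes g :: "(nat \<times> nat \<Rightarrow> 'f::ab_group_add) \<Rightarrow> 'f"
  shows "x \<in> Gsum k n \<Longrightarrow> W j n g x = Deltas (Lx n j x) g (zb n j x)"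
proof (induction j arbitrary: x)
  case 0 then show ?case by simp
next
  case (Suc j)
  have 1: "W (Suc j) n g x = Deltas (Lx n j x) g (zb n j x)
      - Deltas (Lx n j x) g (zb n (Suc j) x)"
    using Suc by (simp add: setcomp0_in Lx_setcomp zb_setcomp)
  have "zb n j x = setcomp n (zb n j x) j 0 + iota n j (comp (zb n j x) j)"
    by (rule decomp1[OF zb_in[OF Suc.prems]])
  then have e: "zb n j x = zb n (Suc j) x + iota n j (comp x j)"
    unfolding zb.simps(2) comp_zb[OF le_refl] .
  have 2: "Deltas (Lx n (Suc j) x) g (zb n (Suc j) x) = Deltas (Lx n j x) g (zb n (Suc j) x + iota n j (comp x j))
     - Deltas (Lx n j x) g (zb n (Suc j) x)"
    by (simp only: Lx.simps Deltas_Cons Delta_apply)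
  show ?case unfolding 1 2 e[symmetric] ..
qed

definition indep :: "nat \<Rightarrow> (nat \<Rightarrow> nat) \<Rightarrow> nat \<Rightarrow> ((nat \<times> nat \<Rightarrow> 'f::zero) \<Rightarrow> 'b) \<Rightarrow> bool" where
  "indep k n j g \<longleftrightarrow> (\<forall>z\<in>Gsum k n. g (setcomp n z j 0) = g z)"

lemma indep_W:
  fixes g :: "(nat \<times> nat \<Rightarrow> 'f::ab_group_add) \<Rightarrow> 'f"
  shows "indep k n j g \<Longrightarrow> indep k n j (W i n g)"
proof (induction i)
  case 0 then show ?case by simp
next
  case (Suc i)
  then have ih: "indep k n j (W i n g)" by simp
  show ?case unfolding indep_def
  proof
    fix z :: "nat \<times> nat \<Rightarrow> 'f" assume z: "z \<in> Gsum k n"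
    have 1: "W i n g (setcomp n z j 0) = W i n g z" using ih z by (simp add: indep_def)
    have "W i n g (setcomp n (setcomp n z j 0) i 0) = W i n g (setcomp n (setcomp n z i 0) j 0)"
      by (cases "i = j") (simp_all add: setcomp_commute)
    also have "\<dots> = W i n g (setcomp n z i 0)" using ih setcomp0_in[OF z] unfolding indep_def by blast
    finally show "W (Suc i) n g (setcomp n z j 0) = W (Suc i) n g z" using 1 by simp
  qed
qed

lemma W_indep_zero:
  fixes g :: "(nat \<times> nat \<Rightarrow> 'f::ab_group_add) \<Rightarrow> 'f"
  assumes "indep k n j g" "j < i" "x \<in> Gsum k n"
  shows "W i n g x = 0"
proof -
  have base: "\<forall>x\<in>Gsum k n. W (Suc j) n g x = 0"
    using indep_W[OF assms(1), of j] by (simp add: indep_def)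
  have "\<forall>x\<in>Gsum k n. W (Suc j + t) n g x = 0" for t
  proof (induction t)
    case 0 show ?case using base by simp
  next
    case (Suc t)
    show ?case
    proof
      fix x :: "nat \<times> nat \<Rightarrow> 'f" assume x: "x \<in> Gsum k n"
      have "W (Suc j + Suc t) n g x = W (Suc j + t) n g x - W (Suc j + t) n g (setcomp n x (Suc j + t) 0)"
        by simp
      also have "\<dots> = 0" using Suc.IH x setcomp0_in[OF x] by simp
      finally show "W (Suc j + Suc t) n g x = 0" .
    qed
  qed
  from this[of "i - Suc j"] assms show ?thesis by simp
qed

lemma indep_Deltas:
  fixes g :: "(nat \<times> nat \<Rightarrow> 'f::ab_group_add) \<Rightarrow> 'f"
  shows "set hs \<subseteq> Gsum k n \<Longrightarrow> indep k n j g \<Longrightarrow> indep k n j (Deltas hs g)"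
proof (induction hs)
  case Nil then show ?case by simp
next
  case (Cons h hs)
  then have ih: "indep k n j (Deltas hs g)" by simp
  show ?case unfolding indep_def Deltas_Cons Delta_apply
  proof
    fix z :: "nat \<times> nat \<Rightarrow> 'f" assume z: "z \<in> Gsum k n"
    have h: "h \<in> Gsum k n" using Cons by simp
    have e: "setcomp n (setcomp n z j 0 + h) j 0 = setcomp n (z + h) j 0"
      by (auto simp: setcomp_def fun_eq_iff)
    have "Deltas hs g (setcomp n z j 0 + h) = Deltas hs g (setcomp n (setcomp n z j 0 + h) j 0)"
      using ih z h by (simp add: indep_def Gsum_add setcomp0_in)
    also have "\<dots> = Deltas hs g (z + h)" unfolding e using ih z h by (simp add: indep_def Gsum_add)
    finally show "Deltas hs g (setcomp n z j 0 + h) - Deltas hs g (setcomp n z j 0) =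
        Deltas hs g (z + h) - Deltas hs g z" using ih z by (simp add: indep_def)
  qed
qed

section \<open>Degree\<close>

definition deg_le :: "nat \<Rightarrow> (nat \<Rightarrow> nat) \<Rightarrow> nat \<Rightarrow> ((nat \<times> nat \<Rightarrow> 'f::ab_group_add) \<Rightarrow> 'f) \<Rightarrow> bool" where
  "deg_le k n d g \<longleftrightarrow> (\<forall>(hs::(nat \<times> nat \<Rightarrow> 'f) list) y. set hs \<subseteq> Gsum k n \<longrightarrow> y \<in> Gsum k n \<longrightarrow> d < length hs \<longrightarrow> Deltas hs g y = 0)"

lemma Deltas_snoc: "Deltas (xs @ [h]) F = Deltas xs (Delta h F)"
  by (simp add: Deltas_append Deltas_Cons)

lemma deg_step:
  fixes g :: "(nat \<times> nat \<Rightarrow> 'f::ab_group_add) \<Rightarrow> 'f"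
  assumes "\<And>h. h \<in> Gsum k n \<Longrightarrow> deg_le k n d (Delta h g)"
  shows "deg_le k n (Suc d) g"
  unfolding deg_le_def
proof (intro allI impI)
  fix hs :: "(nat \<times> nat \<Rightarrow> 'f) list" and y :: "nat \<times> nat \<Rightarrow> 'f"
  assume hs: "set hs \<subseteq> Gsum k n" and y: "y \<in> Gsum k n" and l: "Suc d < length hs"
  obtain hs' h where e: "hs = hs' @ [h]" using l by (cases hs rule: rev_cases) auto
  have h: "h \<in> Gsum k n" and hs': "set hs' \<subseteq> Gsum k n" using hs e by auto
  have "Deltas hs g y = Deltas hs' (Delta h g) y" unfolding e Deltas_snoc ..
  also have "\<dots> = 0" using assms[OF h] hs' y l e unfolding deg_le_def by simp
  finally show "Deltas hs g y = 0" .
qed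

lemma deg_const:
  fixes g :: "(nat \<times> nat \<Rightarrow> 'f::ab_group_add) \<Rightarrow> 'f"
  assumes "\<And>y. y \<in> Gsum k n \<Longrightarrow> g y = c"
  shows "deg_le k n d g"
  unfolding deg_le_def
proof (intro allI impI)
  fix hs :: "(nat \<times> nat \<Rightarrow> 'f) list" and y :: "nat \<times> nat \<Rightarrow> 'f"
  assume hs: "set hs \<subseteq> Gsum k n" and y: "y \<in> Gsum k n" and l: "d < length hs"
  obtain hs' h where e: "hs = hs' @ [h]" using l by (cases hs rule: rev_cases) auto
  have h: "h \<in> Gsum k n" and hs': "set hs' \<subseteq> Gsum k n" using hs e by auto
  have "Deltas hs g y = Deltas hs' (Delta h g) y" unfolding e Deltas_snoc ..
  also have "\<dots> = Deltas hs' (\<lambda>_. 0) y"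
    by (rule Deltas_cong[OF hs' y]) (simp add: Delta_apply assms h Gsum_add)
  finally show "Deltas hs g y = 0" by (simp add: Deltas_zero)
qed

lemma deg_cong:
  assumes "deg_le k n d g" "\<And>y. y \<in> Gsum k n \<Longrightarrow> g y = g' y"
  shows "deg_le k n d g'"
  using assms Deltas_cong[of _ k n _ g g'] unfolding deg_le_def by metis

lemma deg_add: "deg_le k n d f \<Longrightarrow> deg_le k n d g \<Longrightarrow> deg_le k n d (\<lambda>y. f y + g y)"
  unfolding deg_le_def Deltas_add by simp
lemma deg_diff: "deg_le k n d f \<Longrightarrow> deg_le k n d g \<Longrightarrow> deg_le k n d (\<lambda>y. f y - g y)"
  unfolding deg_le_def Deltas_diff by simp
lemma deg_scale: "deg_le k n d f \<Longrightarrow> deg_le k n d (\<lambda>y. (a::'f::ring) * f y)"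
  unfolding deg_le_def Deltas_scale by simp
lemma deg_sum: "(\<And>i. i \<in> I \<Longrightarrow> deg_le k n d (f i)) \<Longrightarrow> deg_le k n d (\<lambda>y. \<Sum>i\<in>I. f i y)"
  unfolding deg_le_def Deltas_sum by simp
lemma deg_mono: "deg_le k n d f \<Longrightarrow> d \<le> d' \<Longrightarrow> deg_le k n d' f"
  unfolding deg_le_def by simp


definition mlin :: "nat \<Rightarrow> (nat \<Rightarrow> nat) \<Rightarrow> nat set \<Rightarrow> ((nat \<Rightarrow> nat \<times> nat \<Rightarrow> 'f::field) \<Rightarrow> 'f) \<Rightarrow> bool" where
  "mlin k n S T \<longleftrightarrow>
     (\<forall>ys ys'. (\<forall>i\<in>S. ys i = ys' i) \<longrightarrow> T ys = T ys') \<and>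
     (\<forall>ys i u v. (\<forall>j\<in>S. ys j \<in> Gsum k n) \<longrightarrow> i \<in> S \<longrightarrow> u \<in> Gsum k n \<longrightarrow> v \<in> Gsum k n \<longrightarrow>
        T (ys(i := u + v)) = T (ys(i := u)) + T (ys(i := v))) \<and>
     (\<forall>ys i u a. (\<forall>j\<in>S. ys j \<in> Gsum k n) \<longrightarrow> i \<in> S \<longrightarrow> u \<in> Gsum k n \<longrightarrow>
        T (ys(i := smul a u)) = a * T (ys(i := u)))"

context
  fixes k :: nat and n :: "nat \<Rightarrow> nat" and S :: "nat set"
    and T :: "(nat \<Rightarrow> nat \<times> nat \<Rightarrow> 'f::field) \<Rightarrow> 'f"
  assumes ml: "mlin k n S T"
begin

lemma mlin_local: "(\<And>i. i \<in> S \<Longrightarrow> ys i = ys' i) \<Longrightarrow> T ys = T ys'"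
  using ml unfolding mlin_def by blast

lemma mlin_add: "(\<And>j. j \<in> S \<Longrightarrow> ys j \<in> Gsum k n) \<Longrightarrow> i \<in> S \<Longrightarrow> u \<in> Gsum k n \<Longrightarrow> v \<in> Gsum k n \<Longrightarrow>
   T (ys(i := u + v)) = T (ys(i := u)) + T (ys(i := v))"
  using ml unfolding mlin_def by blast

lemma mlin_smul: "(\<And>j. j \<in> S \<Longrightarrow> ys j \<in> Gsum k n) \<Longrightarrow> i \<in> S \<Longrightarrow> u \<in> Gsum k n \<Longrightarrow>
   T (ys(i := smul a u)) = a * T (ys(i := u))"
  using ml unfolding mlin_def by blast

lemma mlin_zero: "(\<And>j. j \<in> S \<Longrightarrow> ys j \<in> Gsum k n) \<Longrightarrow> i \<in> S \<Longrightarrow> T (ys(i := 0)) = 0"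
proof -
  assume a: "\<And>j. j \<in> S \<Longrightarrow> ys j \<in> Gsum k n" "i \<in> S"
  have "smul 0 (0::nat \<times> nat \<Rightarrow> 'f) = 0" by (simp add: smul_def fun_eq_iff)
  then show ?thesis using mlin_smul[of ys i 0 0, OF a Gsum_zero] by simp
qed

lemma mlin_diff: "(\<And>j. j \<in> S \<Longrightarrow> ys j \<in> Gsum k n) \<Longrightarrow> i \<in> S \<Longrightarrow> u \<in> Gsum k n \<Longrightarrow> v \<in> Gsum k n \<Longrightarrow>
   T (ys(i := u - v)) = T (ys(i := u)) - T (ys(i := v))"
  using mlin_add[of ys i "u - v" v] by (simp add: Gsum_diff)

lemma mlin_sum:
  assumes "\<And>j. j \<in> S \<Longrightarrow> ys j \<in> Gsum k n" "i \<in> S" "finite I" "\<And>t. t \<in> I \<Longrightarrow> f t \<in> Gsum k n"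
  shows "T (ys(i := \<Sum>t\<in>I. f t)) = (\<Sum>t\<in>I. T (ys(i := f t)))"
  using assms(3,4)
proof (induction I rule: finite_induct)
  case empty
  show ?case unfolding sum.empty by (rule mlin_zero[OF assms(1,2)])
next
  case (insert x F)
  have "T (ys(i := sum f (insert x F))) = T (ys(i := f x + sum f F))"
    by (simp only: sum.insert[OF insert(1,2)])
  also have "\<dots> = T (ys(i := f x)) + T (ys(i := sum f F))"
    using insert by (intro mlin_add[OF assms(1,2)] Gsum_sum) auto
  finally have calc: "T (ys(i := sum f (insert x F))) = T (ys(i := f x)) + T (ys(i := sum f F))" .
  have ih: "T (ys(i := sum f F)) = (\<Sum>t\<in>F. T (ys(i := f t)))" by (rule insert.IH) (simp add: insert.prems)
  show ?case unfolding calc ih by (simp only: sum.insert[OF insert(1,2)])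
qed

lemma mlin_fix: "h \<in> Gsum k n \<Longrightarrow> mlin k n (S - {s}) (\<lambda>ys. T (ys(s := h)))"
  unfolding mlin_def
proof (intro conjI allI impI)
  fix ys ys' :: "nat \<Rightarrow> nat \<times> nat \<Rightarrow> 'f"
  assume "\<forall>i\<in>S - {s}. ys i = ys' i"
  then show "T (ys(s := h)) = T (ys'(s := h))" by (intro mlin_local) auto
next
  fix ys :: "nat \<Rightarrow> nat \<times> nat \<Rightarrow> 'f" and i and u v :: "nat \<times> nat \<Rightarrow> 'f"
  assume a: "\<forall>j\<in>S - {s}. ys j \<in> Gsum k n" "i \<in> S - {s}" "u \<in> Gsum k n" "v \<in> Gsum k n"
    "h \<in> Gsum k n"
  then have "T ((ys(s := h))(i := u + v)) = T ((ys(s := h))(i := u)) + T ((ys(s := h))(i := v))"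
    by (intro mlin_add) auto
  then show "T ((ys(i := u + v))(s := h)) = T ((ys(i := u))(s := h)) + T ((ys(i := v))(s := h))"
    using a by (simp add: fun_upd_twist)
next
  fix ys :: "nat \<Rightarrow> nat \<times> nat \<Rightarrow> 'f" and i and u :: "nat \<times> nat \<Rightarrow> 'f" and a
  assume as: "\<forall>j\<in>S - {s}. ys j \<in> Gsum k n" "i \<in> S - {s}" "u \<in> Gsum k n"
    "h \<in> Gsum k n"
  then have "T ((ys(s := h))(i := smul a u)) = a * T ((ys(s := h))(i := u))"
    by (intro mlin_smul) auto
  then show "T ((ys(i := smul a u))(s := h)) = a * T ((ys(i := u))(s := h))"
    using as by (simp add: fun_upd_twist)
qed

end

lemma telescope:
  fixes T :: "(nat \<Rightarrow> nat \<times> nat \<Rightarrow> 'f::field) \<Rightarrow> 'f"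
  assumes "finite S" "mlin k n S T" "\<And>i. i \<in> S \<Longrightarrow> us i \<in> Gsum k n" "\<And>i. i \<in> S \<Longrightarrow> vs i \<in> Gsum k n"
  shows "T us - T vs = (\<Sum>s\<in>S. T (\<lambda>i. if i = s then us s - vs s else if i < s then us i else vs i))"
  using assms
proof (induction S arbitrary: T rule: finite_linorder_max_induct)
  case empty
  then show ?case using mlin_local[of k n "{}" T us vs] by simp
next
  case (insert b A)
  have bA: "b \<notin> A" using insert.hyps(2) by auto
  let ?T' = "\<lambda>ys. T (ys(b := vs b))"
  have e: "insert b A - {b} = A" using bA by auto
  have mlA: "mlin k n A ?T'"
    using mlin_fix[OF insert.prems(1) insert.prems(3)[OF insertI1], where s = b] unfolding e .
  have IH: "?T' us - ?T' vs = (\<Sum>s\<in>A. ?T' (\<lambda>i. if i = s then us s - vs s else if i < s then us i else vs i))"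
    by (rule insert.IH[OF mlA]) (simp_all add: insert.prems)
  have d: "T (us(b := us b - vs b)) = T (us(b := us b)) - T (us(b := vs b))"
    by (rule mlin_diff[OF insert.prems(1)]) (simp_all add: insert.prems)
  have 1: "T us - T (us(b := vs b)) = T (us(b := us b - vs b))"
    unfolding d fun_upd_triv ..
  have 2: "T (us(b := us b - vs b)) = T (\<lambda>i. if i = b then us b - vs b else if i < b then us i else vs i)"
    using insert.hyps(2) by (intro mlin_local[OF insert.prems(1)]) auto
  have 3: "?T' (\<lambda>i. if i = s then us s - vs s else if i < s then us i else vs i)
      = T (\<lambda>i. if i = s then us s - vs s else if i < s then us i else vs i)" if "s \<in> A" for s
  proof -
    have "s < b" using insert.hyps(2) that by auto
    then have "(\<lambda>i. if i = s then us s - vs s else if i < s then us i else vs i)(b := vs b)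
      = (\<lambda>i. if i = s then us s - vs s else if i < s then us i else vs i)" by (auto simp: fun_eq_iff)
    then show ?thesis by simp
  qed
  have "T us - T vs = (T us - T (us(b := vs b))) + (?T' us - ?T' vs)" by simp
  also have "\<dots> = T (\<lambda>i. if i = b then us b - vs b else if i < b then us i else vs i)
     + (\<Sum>s\<in>A. T (\<lambda>i. if i = s then us s - vs s else if i < s then us i else vs i))"
    unfolding 1 2 IH using 3 by simp
  also have "\<dots> = (\<Sum>s\<in>insert b A. T (\<lambda>i. if i = s then us s - vs s else if i < s then us i else vs i))"
    using insert.hyps(1) bA by simp
  finally show ?case .
qed


lemma diag_deg_aux:
  fixes T :: "(nat \<Rightarrow> nat \<times> nat \<Rightarrow> 'f::field) \<Rightarrow> 'f"
  assumes "card S = d" "finite S" "mlin k n S T" "\<And>i. cs i \<in> Gsum k n"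
  shows "deg_le k n d (\<lambda>y. T (\<lambda>i. y + cs i))"
  using assms
proof (induction d arbitrary: S T cs)
  case 0
  then have S: "S = {}" by simp
  show ?case
  proof (rule deg_const)
    fix y :: "nat \<times> nat \<Rightarrow> 'f"
    show "T (\<lambda>i. y + cs i) = T (\<lambda>i. 0)" by (rule mlin_local[OF "0.prems"(3)]) (simp add: S)
  qed
next
  case (Suc d)
  show ?case
  proof (rule deg_step)
    fix h :: "nat \<times> nat \<Rightarrow> 'f" assume h: "h \<in> Gsum k n"
    define Ts where "Ts s = (\<lambda>ys. T (ys(s := h)))" for s
    define css where "css s = (\<lambda>i. if i < s then h + cs i else cs i)" for s
    have mls: "mlin k n (S - {s}) (Ts s)" for s
      unfolding Ts_def by (rule mlin_fix[OF Suc.prems(3) h])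
    have degs: "deg_le k n d (\<lambda>y. Ts s (\<lambda>i. y + css s i))" if s: "s \<in> S" for s
    proof -
      have "card (S - {s}) = d" using s Suc.prems(1,2) by simp
      then show ?thesis
        by (rule Suc.IH[OF _ _ mls]) (use Suc.prems h in \<open>auto simp: css_def Gsum_add\<close>)
    qed
    have eq: "Delta h (\<lambda>y. T (\<lambda>i. y + cs i)) y = (\<Sum>s\<in>S. Ts s (\<lambda>i. y + css s i))"
      if y: "y \<in> Gsum k n" for y
    proof -
      have "Delta h (\<lambda>y. T (\<lambda>i. y + cs i)) y = T (\<lambda>i. (y + h) + cs i) - T (\<lambda>i. y + cs i)"
        by (simp add: Delta_apply)
      also have "\<dots> = (\<Sum>s\<in>S. T (\<lambda>i. if i = s then (y + h + cs s) - (y + cs s)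
          else if i < s then y + h + cs i else y + cs i))"
        by (rule telescope[OF Suc.prems(2,3), where us = "\<lambda>i. y + h + cs i" and vs = "\<lambda>i. y + cs i"]) (simp_all add: Gsum_add y h Suc.prems(4))
      also have "\<dots> = (\<Sum>s\<in>S. Ts s (\<lambda>i. y + css s i))"
      proof (rule sum.cong[OF refl])
        fix s assume "s \<in> S"
        have "(\<lambda>i. if i = s then (y + h + cs s) - (y + cs s)
          else if i < s then y + h + cs i else y + cs i) = (\<lambda>i. y + css s i)(s := h)"
          by (auto simp: css_def fun_eq_iff algebra_simps)
        then show "T (\<lambda>i. if i = s then (y + h + cs s) - (y + cs s)
          else if i < s then y + h + cs i else y + cs i) = Ts s (\<lambda>i. y + css s i)"
          unfolding Ts_def by simp
      qed
      finally show ?thesis .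
    qed
    show "deg_le k n d (Delta h (\<lambda>y. T (\<lambda>i. y + cs i)))"
      by (rule deg_cong[OF deg_sum[of S k n d "\<lambda>s y. Ts s (\<lambda>i. y + css s i)"]])
        (use degs eq in auto)
  qed
qed

lemma diag_deg:
  fixes T :: "(nat \<Rightarrow> nat \<times> nat \<Rightarrow> 'f::field) \<Rightarrow> 'f"
  assumes "finite S" "mlin k n S T" "\<And>i. cs i \<in> Gsum k n"
  shows "deg_le k n (card S) (\<lambda>y. T (\<lambda>i. y + cs i))"
  using diag_deg_aux[OF refl assms] .

lemma shift_diag:
  fixes T :: "(nat \<Rightarrow> nat \<times> nat \<Rightarrow> 'f::field) \<Rightarrow> 'f"
  assumes "finite S" "mlin k n S T" "\<And>i. cs i \<in> Gsum k n"
  shows "deg_le k n (card S - 1) (\<lambda>y. T (\<lambda>i. y + cs i) - T (\<lambda>i. y))"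
proof -
  define Ts where "Ts s = (\<lambda>ys. T (ys(s := cs s)))" for s
  define css where "css s = (\<lambda>i. if i < s then cs i else 0)" for s
  have degs: "deg_le k n (card S - 1) (\<lambda>y. Ts s (\<lambda>i. y + css s i))" if s: "s \<in> S" for s
  proof -
    have "card S - 1 = card (S - {s})" using s assms(1) by simp
    moreover have "mlin k n (S - {s}) (Ts s)"
      unfolding Ts_def by (rule mlin_fix[OF assms(2) assms(3)])
    ultimately show ?thesis
      using diag_deg[of "S - {s}" k n "Ts s" "css s"] assms by (simp add: css_def Gsum_zero)
  qed
  have eq: "T (\<lambda>i. y + cs i) - T (\<lambda>i. y) = (\<Sum>s\<in>S. Ts s (\<lambda>i. y + css s i))"
    if y: "y \<in> Gsum k n" for y
  proof -
    have "T (\<lambda>i. y + cs i) - T (\<lambda>i. y) = (\<Sum>s\<in>S. T (\<lambda>i. if i = s then (y + cs s) - y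
          else if i < s then y + cs i else y))"
      by (rule telescope[OF assms(1,2), where us = "\<lambda>i. y + cs i" and vs = "\<lambda>i. y"]) (simp_all add: Gsum_add y assms(3))
    also have "\<dots> = (\<Sum>s\<in>S. Ts s (\<lambda>i. y + css s i))"
    proof (rule sum.cong[OF refl])
      fix s assume "s \<in> S"
      have "(\<lambda>i. if i = s then (y + cs s) - y else if i < s then y + cs i else y)
         = (\<lambda>i. y + css s i)(s := cs s)"
        by (auto simp: css_def fun_eq_iff)
      then show "T (\<lambda>i. if i = s then (y + cs s) - y else if i < s then y + cs i else y)
          = Ts s (\<lambda>i. y + css s i)" unfolding Ts_def by simp
    qed
    finally show ?thesis .
  qed
  show ?thesis
    by (rule deg_cong[OF deg_sum[of S k n "card S - 1" "\<lambda>s y. Ts s (\<lambda>i. y + css s i)"]])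
      (use degs eq in auto)
qed


section \<open>Expansion in coordinates\<close>

definition ebasis :: "nat \<times> nat \<Rightarrow> nat \<times> nat \<Rightarrow> 'f::zero_neq_one" where
  "ebasis v = (\<lambda>w. if w = v then 1 else 0)"

definition VS :: "nat \<Rightarrow> (nat \<Rightarrow> nat) \<Rightarrow> nat set \<Rightarrow> (nat \<Rightarrow> nat \<times> nat) set" where
  "VS k n S = {vs. \<forall>i. (i \<in> S \<longrightarrow> vs i \<in> idx k n) \<and> (i \<notin> S \<longrightarrow> vs i = (0,0))}"

lemma finite_VS: "finite S \<Longrightarrow> finite (VS k n S)"
  unfolding VS_def by (rule finite_set_of_finite_funs[OF _ finite_idx])

lemma ebasis_in: "v \<in> idx k n \<Longrightarrow> ebasis v \<in> Gsum k n"
  by (auto simp: ebasis_def Gsum_def)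

lemma vec_expand:
  assumes "(x :: nat \<times> nat \<Rightarrow> 'f::field) \<in> Gsum k n"
  shows "x = (\<Sum>v\<in>idx k n. smul (x v) (ebasis v))"
proof (rule ext)
  fix w
  have "(\<Sum>v\<in>idx k n. smul (x v) (ebasis v)) w = (\<Sum>v\<in>idx k n. if v = w then x v else 0)"
    unfolding sum_fun_apply by (rule sum.cong) (auto simp: smul_def ebasis_def)
  also have "\<dots> = (if w \<in> idx k n then x w else 0)" by (simp add: finite_idx)
  also have "\<dots> = x w" using assms by (cases w) (auto simp: Gsum_def)
  finally show "x w = (\<Sum>v\<in>idx k n. smul (x v) (ebasis v)) w" by simp
qed

lemma expand:
  fixes T :: "(nat \<Rightarrow> nat \<times> nat \<Rightarrow> 'f::field) \<Rightarrow> 'f"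
  assumes "finite S" "mlin k n S T" "\<And>i. i \<in> S \<Longrightarrow> ys i \<in> Gsum k n"
  shows "T ys = (\<Sum>vs\<in>VS k n S. (\<Prod>i\<in>S. ys i (vs i)) * T (\<lambda>i. ebasis (vs i)))"
  using assms
proof (induction S arbitrary: T rule: finite_induct)
  case empty
  have "VS k n {} = {\<lambda>i. (0,0)}" by (auto simp: VS_def fun_eq_iff)
  moreover have "T ys = T (\<lambda>i. ebasis (0,0))" by (rule mlin_local[OF empty.prems(1)]) simp
  ultimately show ?case by simp
next
  case (insert s A)
  have ysS: "ys s \<in> Gsum k n" using insert.prems by simp
  have e: "insert s A - {s} = A" using insert.hyps by auto
  define Tv where "Tv v = (\<lambda>zs. T (zs(s := ebasis v)))" for v
  have mlv: "mlin k n A (Tv v)" if "v \<in> idx k n" for v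
    using mlin_fix[OF insert.prems(1) ebasis_in[OF that], where s = s] unfolding e Tv_def .
  have "T ys = T (ys(s := \<Sum>v\<in>idx k n. smul (ys s v) (ebasis v)))"
    unfolding fun_upd_idem[of ys s, OF vec_expand[OF ysS]] ..
  also have "\<dots> = (\<Sum>v\<in>idx k n. T (ys(s := smul (ys s v) (ebasis v))))"
    by (rule mlin_sum[OF insert.prems(1)]) (simp_all add: insert.prems finite_idx Gsum_smul ebasis_in)
  also have "\<dots> = (\<Sum>v\<in>idx k n. ys s v * Tv v ys)"
    unfolding Tv_def
    by (rule sum.cong[OF refl], rule mlin_smul[OF insert.prems(1)]) (simp_all add: insert.prems ebasis_in)
  also have "\<dots> = (\<Sum>v\<in>idx k n. ys s v * (\<Sum>vs\<in>VS k n A. (\<Prod>i\<in>A. ys i (vs i)) * Tv v (\<lambda>i. ebasis (vs i))))"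
  proof (rule sum.cong[OF refl])
    fix v assume v: "v \<in> idx k n"
    have "Tv v ys = (\<Sum>vs\<in>VS k n A. (\<Prod>i\<in>A. ys i (vs i)) * Tv v (\<lambda>i. ebasis (vs i)))"
      by (rule insert.IH[OF mlv[OF v]]) (simp add: insert.prems)
    then show "ys s v * Tv v ys = ys s v * (\<Sum>vs\<in>VS k n A. (\<Prod>i\<in>A. ys i (vs i)) * Tv v (\<lambda>i. ebasis (vs i)))"
      by simp
  qed
  also have "\<dots> = (\<Sum>(v, vs)\<in>idx k n \<times> VS k n A. ys s v * ((\<Prod>i\<in>A. ys i (vs i)) * Tv v (\<lambda>i. ebasis (vs i))))"
    by (simp add: sum_distrib_left sum.cartesian_product)
  also have "\<dots> = (\<Sum>(v, vs)\<in>idx k n \<times> VS k n A. (\<Prod>i\<in>insert s A. ys i ((vs(s := v)) i)) * T (\<lambda>i. ebasis ((vs(s := v)) i)))"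
  proof (rule sum.cong[OF refl], clarify)
    fix v vs assume "v \<in> idx k n" "vs \<in> VS k n A"
    have p: "(\<Prod>i\<in>insert s A. ys i ((vs(s := v)) i)) = ys s v * (\<Prod>i\<in>A. ys i (vs i))"
    proof -
      have "(\<Prod>i\<in>A. ys i ((vs(s := v)) i)) = (\<Prod>i\<in>A. ys i (vs i))"
        using insert.hyps by (intro prod.cong) auto
      then show ?thesis using insert.hyps by (simp add: prod.insert)
    qed
    have t: "(\<lambda>i. ebasis ((vs(s := v)) i)) = (\<lambda>i. ebasis (vs i))(s := ebasis v)"
      by (auto simp: fun_eq_iff)
    show "ys s v * ((\<Prod>i\<in>A. ys i (vs i)) * Tv v (\<lambda>i. ebasis (vs i)))
      = (\<Prod>i\<in>insert s A. ys i ((vs(s := v)) i)) * T (\<lambda>i. ebasis ((vs(s := v)) i))"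
      unfolding p t Tv_def by (simp add: mult.assoc)
  qed
  also have "\<dots> = (\<Sum>vs'\<in>(\<lambda>(v, vs). vs(s := v)) ` (idx k n \<times> VS k n A).
       (\<Prod>i\<in>insert s A. ys i (vs' i)) * T (\<lambda>i. ebasis (vs' i)))"
  proof -
    have inj: "inj_on (\<lambda>(v, vs). vs(s := v)) (idx k n \<times> VS k n A)"
    proof (rule inj_onI, clarify)
      fix v vs v' vs'
      assume a: "vs \<in> VS k n A" "vs' \<in> VS k n A" "vs(s := v) = vs'(s := v')"
      then have "v = v'" by (metis fun_upd_same)
      moreover have "vs = vs'"
      proof
        fix i show "vs i = vs' i"
        proof (cases "i = s")
          case True then show ?thesis using a insert.hyps by (auto simp: VS_def)
        next
          case False then show ?thesis using a(3) by (metis fun_upd_other)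
        qed
      qed
      ultimately show "v = v' \<and> vs = vs'" by simp
    qed
    show ?thesis
      unfolding sum.reindex[OF inj] comp_def by (rule sum.cong) auto
  qed
  also have "(\<lambda>(v, vs). vs(s := v)) ` (idx k n \<times> VS k n A) = VS k n (insert s A)"
  proof
    show "(\<lambda>(v, vs). vs(s := v)) ` (idx k n \<times> VS k n A) \<subseteq> VS k n (insert s A)"
      using insert.hyps by (auto simp: VS_def)
    show "VS k n (insert s A) \<subseteq> (\<lambda>(v, vs). vs(s := v)) ` (idx k n \<times> VS k n A)"
    proof
      fix vs assume vs: "vs \<in> VS k n (insert s A)"
      have "vs = (\<lambda>(v, vs). vs(s := v)) (vs s, vs(s := (0,0)))" by simp
      moreover have "(vs s, vs(s := (0,0))) \<in> idx k n \<times> VS k n A"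
        using vs insert.hyps by (auto simp: VS_def)
      ultimately show "vs \<in> (\<lambda>(v, vs). vs(s := v)) ` (idx k n \<times> VS k n A)" by (rule image_eqI)
    qed
  qed
  finally show ?case .
qed


section \<open>Polynomial representations\<close>

definition polyD :: "('v \<Rightarrow> 'f::comm_ring_1) set \<Rightarrow> 'v multiset set \<Rightarrow> (('v \<Rightarrow> 'f) \<Rightarrow> 'f) \<Rightarrow> bool" where
  "polyD D Ms f \<longleftrightarrow> (\<exists>cf. is_poly cf \<and> (\<forall>M. cf M \<noteq> 0 \<longrightarrow> M \<in> Ms) \<and> (\<forall>y\<in>D. f y = poly_eval cf y))"

lemma poly_eval_superset:
  assumes "finite A" "{M. cf M \<noteq> 0} \<subseteq> A"
  shows "poly_eval cf y = (\<Sum>M\<in>A. cf M * prod_mset (image_mset y M))"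
  unfolding poly_eval_def by (rule sum.mono_neutral_left) (use assms in auto)

lemma poly_terms:
  fixes coef :: "'i \<Rightarrow> 'f::comm_ring_1" and mon :: "'i \<Rightarrow> 'v multiset"
  assumes "finite I" "\<And>i. i \<in> I \<Longrightarrow> coef i \<noteq> 0 \<Longrightarrow> mon i \<in> Ms"
  shows "polyD D Ms (\<lambda>y. \<Sum>i\<in>I. coef i * prod_mset (image_mset y (mon i)))"
proof -
  define cf where "cf M = (\<Sum>i\<in>{i\<in>I. mon i = M}. coef i)" for M
  have supp: "{M. cf M \<noteq> 0} \<subseteq> mon ` I"
  proof
    fix M assume "M \<in> {M. cf M \<noteq> 0}"
    then have "(\<Sum>i\<in>{i\<in>I. mon i = M}. coef i) \<noteq> 0" unfolding cf_def by simp
    then obtain i where "i \<in> {i\<in>I. mon i = M}" by (meson sum.not_neutral_contains_not_neutral)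
    then show "M \<in> mon ` I" by auto
  qed
  have fin: "finite (mon ` I)" using assms(1) by simp
  have "is_poly cf" unfolding is_poly_def by (rule finite_subset[OF supp fin])
  moreover have "\<forall>M. cf M \<noteq> 0 \<longrightarrow> M \<in> Ms"
  proof (intro allI impI)
    fix M assume "cf M \<noteq> 0"
    then obtain i where "i \<in> {i\<in>I. mon i = M}" "coef i \<noteq> 0" unfolding cf_def
      by (meson sum.not_neutral_contains_not_neutral)
    then show "M \<in> Ms" using assms(2) by auto
  qed
  moreover have "(\<Sum>i\<in>I. coef i * prod_mset (image_mset y (mon i))) = poly_eval cf y" for y
  proof -
    have "poly_eval cf y = (\<Sum>M\<in>mon ` I. cf M * prod_mset (image_mset y M))"
      by (rule poly_eval_superset[OF fin supp])
    also have "\<dots> = (\<Sum>M\<in>mon ` I. \<Sum>i\<in>{i\<in>I. mon i = M}. coef i * prod_mset (image_mset y (mon i)))"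
      unfolding cf_def sum_distrib_right by (rule sum.cong) auto
    also have "\<dots> = (\<Sum>i\<in>I. coef i * prod_mset (image_mset y (mon i)))"
      by (rule sum.image_gen[symmetric]) (rule assms(1))
    finally show ?thesis by simp
  qed
  ultimately show ?thesis unfolding polyD_def by blast
qed

lemma polyD_add:
  assumes "polyD D Ms f" "polyD D Ms g"
  shows "polyD D Ms (\<lambda>y. f y + g y)"
proof -
  obtain cf1 where c1: "is_poly cf1" "\<forall>M. cf1 M \<noteq> 0 \<longrightarrow> M \<in> Ms" "\<forall>y\<in>D. f y = poly_eval cf1 y"
    using assms(1) unfolding polyD_def by blast
  obtain cf2 where c2: "is_poly cf2" "\<forall>M. cf2 M \<noteq> 0 \<longrightarrow> M \<in> Ms" "\<forall>y\<in>D. g y = poly_eval cf2 y"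
    using assms(2) unfolding polyD_def by blast
  define A where "A = {M. cf1 M \<noteq> 0} \<union> {M. cf2 M \<noteq> 0}"
  have finA: "finite A" using c1(1) c2(1) by (simp add: A_def is_poly_def)
  define cf where "cf M = cf1 M + cf2 M" for M
  have sA: "{M. cf M \<noteq> 0} \<subseteq> A" by (auto simp: cf_def A_def)
  have "is_poly cf" unfolding is_poly_def by (rule finite_subset[OF sA finA])
  moreover have "\<forall>M. cf M \<noteq> 0 \<longrightarrow> M \<in> Ms"
  proof (intro allI impI)
    fix M assume "cf M \<noteq> 0"
    then have "cf1 M \<noteq> 0 \<or> cf2 M \<noteq> 0" by (auto simp: cf_def)
    then show "M \<in> Ms" using c1(2) c2(2) by blast
  qed
  moreover have "\<forall>y\<in>D. f y + g y = poly_eval cf y"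
  proof
    fix y assume y: "y \<in> D"
    have "poly_eval cf y = (\<Sum>M\<in>A. cf M * prod_mset (image_mset y M))"
      by (rule poly_eval_superset[OF finA sA])
    also have "\<dots> = (\<Sum>M\<in>A. cf1 M * prod_mset (image_mset y M)) + (\<Sum>M\<in>A. cf2 M * prod_mset (image_mset y M))"
      by (simp add: cf_def distrib_right sum.distrib)
    also have "\<dots> = poly_eval cf1 y + poly_eval cf2 y"
      by (simp add: poly_eval_superset[OF finA] A_def)
    finally show "f y + g y = poly_eval cf y" using c1(3) c2(3) y by simp
  qed
  ultimately show ?thesis unfolding polyD_def by blast
qed

lemma polyD_zero: "polyD D Ms (\<lambda>y. 0)"
  unfolding polyD_def by (rule exI[of _ "\<lambda>M. 0"]) (simp add: is_poly_def poly_eval_def)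

lemma polyD_sum:
  assumes "finite J" "\<And>j. j \<in> J \<Longrightarrow> polyD D Ms (f j)"
  shows "polyD D Ms (\<lambda>y. \<Sum>j\<in>J. f j y)"
  using assms
proof (induction J rule: finite_induct)
  case empty then show ?case by (simp add: polyD_zero)
next
  case (insert x F)
  then show ?case by (simp add: polyD_add)
qed

lemma polyD_scale:
  assumes "polyD D Ms f"
  shows "polyD D Ms (\<lambda>y. a * f y)"
proof -
  obtain cf where c: "is_poly cf" "\<forall>M. cf M \<noteq> 0 \<longrightarrow> M \<in> Ms" "\<forall>y\<in>D. f y = poly_eval cf y"
    using assms unfolding polyD_def by blast
  define cf' where "cf' M = a * cf M" for M
  have s: "{M. cf' M \<noteq> 0} \<subseteq> {M. cf M \<noteq> 0}" by (auto simp: cf'_def)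
  have fin: "finite {M. cf M \<noteq> 0}" using c(1) by (simp add: is_poly_def)
  have "is_poly cf'" unfolding is_poly_def by (rule finite_subset[OF s fin])
  moreover have "\<forall>M. cf' M \<noteq> 0 \<longrightarrow> M \<in> Ms"
  proof (intro allI impI)
    fix M assume "cf' M \<noteq> 0"
    then have "cf M \<noteq> 0" by (auto simp: cf'_def)
    then show "M \<in> Ms" using c(2) by blast
  qed
  moreover have "\<forall>y\<in>D. a * f y = poly_eval cf' y"
  proof
    fix y assume "y \<in> D"
    then have "a * f y = a * poly_eval cf y" using c(3) by simp
    also have "\<dots> = (\<Sum>M\<in>{M. cf M \<noteq> 0}. cf' M * prod_mset (image_mset y M))"
      by (simp add: poly_eval_def sum_distrib_left cf'_def mult.assoc)
    also have "\<dots> = poly_eval cf' y" by (rule poly_eval_superset[OF fin s, symmetric])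
    finally show "a * f y = poly_eval cf' y" .
  qed
  ultimately show ?thesis unfolding polyD_def by blast
qed

lemma polyD_mono: "polyD D Ms f \<Longrightarrow> Ms \<subseteq> Ms' \<Longrightarrow> polyD D Ms' f"
  unfolding polyD_def by blast

lemma polyD_cong: "polyD D Ms f \<Longrightarrow> (\<And>y. y \<in> D \<Longrightarrow> f y = g y) \<Longrightarrow> polyD D Ms g"
  unfolding polyD_def by metis

section \<open>Interpolation over a finite field\<close>

lemma delta_poly:
  fixes t s :: "'f::{finite,field}"
  shows "(\<Prod>c\<in>UNIV - {s}. (t - c) / (s - c)) = (if t = s then 1 else 0)"
proof (cases "t = s")
  case True
  then show ?thesis by (auto intro: prod.neutral)
next
  case False
  then have "t \<in> UNIV - {s}" by simp
  then show ?thesis using False by (intro trans[OF prod_zero]) auto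
qed

lemma interp:
  fixes f :: "('v \<Rightarrow> 'f::{finite,field}) \<Rightarrow> 'f"
  assumes finS: "finite S" and dep: "\<And>y y'. (\<And>v. v \<in> S \<Longrightarrow> y v = y' v) \<Longrightarrow> f y = f y'"
  shows "polyD UNIV {M. set_mset M \<subseteq> S} f"
proof -
  define \<delta> where "\<delta> t s = (\<Prod>c\<in>UNIV - {s}. (t - c) / (s - c))" for t s :: 'f
  have \<delta>: "\<delta> t s = (if t = s then 1 else 0)" for t s unfolding \<delta>_def by (rule delta_poly)
  define Z where "Z = {z::'v \<Rightarrow> 'f. \<forall>v. (v \<in> S \<longrightarrow> z v \<in> UNIV) \<and> (v \<notin> S \<longrightarrow> z v = 0)}"
  have finZ: "finite Z" unfolding Z_def by (rule finite_set_of_finite_funs[OF finS]) simp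
  have main: "f y = (\<Sum>z\<in>Z. f z * (\<Prod>v\<in>S. \<delta> (y v) (z v)))" for y
  proof -
    define z0 where "z0 = (\<lambda>v. if v \<in> S then y v else 0)"
    have z0Z: "z0 \<in> Z" by (simp add: Z_def z0_def)
    have "(\<Sum>z\<in>Z. f z * (\<Prod>v\<in>S. \<delta> (y v) (z v))) = f z0 * (\<Prod>v\<in>S. \<delta> (y v) (z0 v))
        + (\<Sum>z\<in>Z - {z0}. f z * (\<Prod>v\<in>S. \<delta> (y v) (z v)))"
      by (rule sum.remove[OF finZ z0Z])
    also have "(\<Sum>z\<in>Z - {z0}. f z * (\<Prod>v\<in>S. \<delta> (y v) (z v))) = 0"
    proof (rule sum.neutral, rule ballI)
      fix z assume z: "z \<in> Z - {z0}"
      have "\<exists>v\<in>S. z v \<noteq> y v"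
      proof (rule ccontr)
        assume "\<not> (\<exists>v\<in>S. z v \<noteq> y v)"
        then have "z = z0" using z by (auto simp: Z_def z0_def fun_eq_iff)
        then show False using z by simp
      qed
      then obtain v where v: "v \<in> S" "z v \<noteq> y v" by blast
      have "(\<Prod>v\<in>S. \<delta> (y v) (z v)) = 0"
        by (rule prod_zero[OF finS], rule bexI[of _ v]) (use v in \<open>auto simp: \<delta>\<close>)
      then show "f z * (\<Prod>v\<in>S. \<delta> (y v) (z v)) = 0" by simp
    qed
    also have "(\<Prod>v\<in>S. \<delta> (y v) (z0 v)) = 1" by (rule prod.neutral) (simp add: \<delta> z0_def)
    also have "f z0 = f y" by (rule dep) (simp add: z0_def)
    finally show ?thesis by simp
  qed
  define X where "X z = Sigma S (\<lambda>v. UNIV - {z v})" for z :: "'v \<Rightarrow> 'f"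
  have finX: "finite (X z)" for z unfolding X_def using finS by auto
  define coef where "coef zB = (case zB of (z, B) \<Rightarrow> f z * ((\<Prod>p\<in>B. inverse (z (fst p) - snd p))
      * (\<Prod>p\<in>X z - B. - snd p * inverse (z (fst p) - snd p))))" for zB
  define mon where "mon zB = (case zB of (z, B) \<Rightarrow> image_mset fst (mset_set B))" for zB :: "('v \<Rightarrow> 'f) \<times> ('v \<times> 'f) set"
  define I where "I = Sigma Z (\<lambda>z. Pow (X z))"
  have finI: "finite I" unfolding I_def using finZ finX by auto
  have expand: "(\<Prod>v\<in>S. \<delta> (y v) (z v)) = (\<Sum>B\<in>Pow (X z).
      ((\<Prod>p\<in>B. inverse (z (fst p) - snd p)) * (\<Prod>p\<in>X z - B. - snd p * inverse (z (fst p) - snd p)))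
      * prod_mset (image_mset y (image_mset fst (mset_set B))))" for y z
  proof -
    have "(\<Prod>v\<in>S. \<delta> (y v) (z v)) = (\<Prod>v\<in>S. \<Prod>c\<in>UNIV - {z v}. (y v - c) / (z v - c))"
      by (simp add: \<delta>_def)
    also have "\<dots> = (\<Prod>p\<in>X z. (y (fst p) - snd p) / (z (fst p) - snd p))"
      unfolding X_def by (subst prod.Sigma) (use finS in \<open>auto simp: case_prod_beta\<close>)
    also have "\<dots> = (\<Prod>p\<in>X z. y (fst p) * inverse (z (fst p) - snd p) + (- snd p * inverse (z (fst p) - snd p)))"
      by (rule prod.cong) (auto simp: divide_inverse algebra_simps)
    also have "\<dots> = (\<Sum>B\<in>Pow (X z). (\<Prod>p\<in>B. y (fst p) * inverse (z (fst p) - snd p))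
        * (\<Prod>p\<in>X z - B. - snd p * inverse (z (fst p) - snd p)))"
      by (rule prod_add[OF finX])
    also have "\<dots> = (\<Sum>B\<in>Pow (X z).
      ((\<Prod>p\<in>B. inverse (z (fst p) - snd p)) * (\<Prod>p\<in>X z - B. - snd p * inverse (z (fst p) - snd p)))
      * prod_mset (image_mset y (image_mset fst (mset_set B))))"
    proof (rule sum.cong[OF refl])
      fix B assume "B \<in> Pow (X z)"
      have "prod_mset (image_mset y (image_mset fst (mset_set B))) = (\<Prod>p\<in>B. y (fst p))"
      proof -
        have "prod_mset (image_mset y (image_mset fst (mset_set B))) = prod_mset (image_mset (\<lambda>p. y (fst p)) (mset_set B))"
          by (simp add: image_mset.compositionality o_def)
        also have "\<dots> = (\<Prod>p\<in>B. y (fst p))" by (rule prod_unfold_prod_mset[symmetric])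
        finally show ?thesis .
      qed
      then show "(\<Prod>p\<in>B. y (fst p) * inverse (z (fst p) - snd p))
        * (\<Prod>p\<in>X z - B. - snd p * inverse (z (fst p) - snd p)) =
        ((\<Prod>p\<in>B. inverse (z (fst p) - snd p)) * (\<Prod>p\<in>X z - B. - snd p * inverse (z (fst p) - snd p)))
      * prod_mset (image_mset y (image_mset fst (mset_set B)))"
        by (simp add: prod.distrib mult_ac)
    qed
    finally show ?thesis .
  qed
  have rep: "f y = (\<Sum>i\<in>I. coef i * prod_mset (image_mset y (mon i)))" for y
  proof -
    have "f y = (\<Sum>z\<in>Z. \<Sum>B\<in>Pow (X z). coef (z, B) * prod_mset (image_mset y (mon (z, B))))"
      unfolding main[of y] expand coef_def mon_def by (simp add: sum_distrib_left mult_ac)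
    also have "\<dots> = (\<Sum>i\<in>I. coef i * prod_mset (image_mset y (mon i)))"
      unfolding I_def by (subst sum.Sigma) (use finZ finX in auto)
    finally show ?thesis .
  qed
  have "polyD UNIV {M. set_mset M \<subseteq> S} (\<lambda>y. \<Sum>i\<in>I. coef i * prod_mset (image_mset y (mon i)))"
  proof (rule poly_terms[OF finI])
    fix i assume i: "i \<in> I"
    then obtain z B where zB: "i = (z, B)" "B \<subseteq> X z" by (auto simp: I_def)
    have "finite B" using zB(2) finX by (rule finite_subset)
    then show "mon i \<in> {M. set_mset M \<subseteq> S}" using zB by (auto simp: mon_def X_def)
  qed
  then show ?thesis by (rule polyD_cong) (simp add: rep)
qed

lemma of_nat_nonzero_field:
  assumes "prime p" "card (UNIV :: 'f::{finite,field} set) = p" "0 < t" "t < p"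
  shows "of_nat t \<noteq> (0::'f)"
proof -
  have "CHAR('f) dvd p" using CHAR_dvd_CARD[where 'a='f] assms(2) by simp
  moreover have "CHAR('f) \<noteq> 1" using CHAR_not_1'[where 'a='f] by simp
  ultimately have "CHAR('f) = p" using assms(1) unfolding prime_nat_iff by blast
  then show ?thesis using assms(3,4) by (simp add: of_nat_eq_0_iff_char_dvd) (meson nat_dvd_not_less)
qed


definition Cset :: "nat \<Rightarrow> nat \<Rightarrow> (nat \<Rightarrow> nat) set" where
  "Cset k m = {c. (\<forall>j. k \<le> j \<longrightarrow> c j = 0) \<and> sum c {..<k} = m}"
definition Lc :: "nat \<Rightarrow> (nat \<Rightarrow> nat) \<Rightarrow> nat list" where
  "Lc k c = concat (map (\<lambda>j. replicate (c j) j) [0..<k])"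
definition wt :: "nat \<Rightarrow> (nat \<Rightarrow> nat) \<Rightarrow> 'f::field" where
  "wt k c = (\<Prod>j<k. inverse (of_nat (fact (c j + 1))))"

lemma finite_Cset: "finite (Cset k m)"
proof -
  have "Cset k m \<subseteq> {c. \<forall>x. (x \<in> {..<k} \<longrightarrow> c x \<in> {..m}) \<and> (x \<notin> {..<k} \<longrightarrow> c x = 0)}"
  proof
    fix c assume c: "c \<in> Cset k m"
    have "c x \<in> {..m}" if x: "x \<in> {..<k}" for x
    proof -
      have "c x \<le> sum c {..<k}" by (rule member_le_sum) (use x in auto)
      then show ?thesis using c by (simp add: Cset_def)
    qed
    moreover have "c x = 0" if "x \<notin> {..<k}" for x using c that by (simp add: Cset_def)
    ultimately show "c \<in> {c. \<forall>x. (x \<in> {..<k} \<longrightarrow> c x \<in> {..m}) \<and> (x \<notin> {..<k} \<longrightarrow> c x = 0)}"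
      by blast
  qed
  moreover have "finite {c. \<forall>x. (x \<in> {..<k} \<longrightarrow> c x \<in> {..m}) \<and> (x \<notin> {..<k} \<longrightarrow> c x = (0::nat))}"
    by (rule finite_set_of_finite_funs) auto
  ultimately show ?thesis by (rule finite_subset)
qed

lemma Lc_Suc: "Lc (Suc k) c = Lc k c @ replicate (c k) k"
  by (simp add: Lc_def)
lemma Lc_0: "Lc 0 c = []" by (simp add: Lc_def)
lemma length_Lc: "length (Lc k c) = sum c {..<k}"
  by (induction k) (simp_all add: Lc_Suc Lc_0)
lemma set_Lc: "set (Lc k c) = {j. j < k \<and> 0 < c j}"
proof (induction k)
  case 0 then show ?case by (simp add: Lc_0)
next
  case (Suc k)
  have "set (Lc (Suc k) c) = {j. j < k \<and> 0 < c j} \<union> (if c k = 0 then {} else {k})"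
    unfolding Lc_Suc set_append Suc by auto
  also have "\<dots> = {j. j < Suc k \<and> 0 < c j}" by (auto simp: less_Suc_eq)
  finally show ?case .
qed
lemma mset_Lc: "mset (Lc k c) = (\<Sum>j<k. replicate_mset (c j) j)"
  by (induction k) (simp_all add: Lc_Suc Lc_0)
lemma sum_list_Lc: "sum_list (map H (Lc k c)) = (\<Sum>j<k. of_nat (c j) * (H j :: 'a::semiring_1))"
  by (induction k) (simp_all add: Lc_Suc Lc_0 sum_list_replicate)
lemma Lc_nth: "i < length (Lc k c) \<Longrightarrow> Lc k c ! i < k"
  using nth_mem[of i "Lc k c"] set_Lc[of k c] by auto
lemma Lc_cong: "(\<And>j. j < k \<Longrightarrow> c j = c' j) \<Longrightarrow> Lc k c = Lc k c'"
  unfolding Lc_def by (rule arg_cong[of _ _ concat], rule map_cong) auto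
lemma length_Lc_Cset: "c \<in> Cset k m \<Longrightarrow> length (Lc k c) = m"
  by (simp add: length_Lc Cset_def)

lemma mset_Lc_upd:
  assumes "j < k"
  shows "mset (Lc k (c(j := Suc (c j)))) = add_mset j (mset (Lc k c))"
proof -
  have "mset (Lc k (c(j := Suc (c j)))) = (\<Sum>i<k. replicate_mset (c i) i + (if i = j then {#j#} else {#}))"
    unfolding mset_Lc by (rule sum.cong) auto
  also have "\<dots> = mset (Lc k c) + {#j#}"
    using assms by (simp add: sum.distrib mset_Lc)
  finally show ?thesis by simp
qed

lemma sum_upd_nat:
  fixes c :: "nat \<Rightarrow> nat"
  assumes "j < k"
  shows "sum (c(j := x)) {..<k} + c j = sum c {..<k} + (x::nat)"
proof -
  have "sum (c(j := x)) {..<k} = x + sum (c(j := x)) ({..<k} - {j})"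
    using assms by (subst sum.remove[where A = "{..<k}" and x = j]) auto
  also have "sum (c(j := x)) ({..<k} - {j}) = sum c ({..<k} - {j})" by (rule sum.cong) auto
  moreover have "sum c {..<k} = c j + sum c ({..<k} - {j})"
    using assms by (subst sum.remove[where A = "{..<k}" and x = j]) auto
  ultimately show ?thesis by simp
qed

lemma Cset_upd: "c \<in> Cset k m \<Longrightarrow> j < k \<Longrightarrow> c(j := Suc (c j)) \<in> Cset k (Suc m)"
  using sum_upd_nat[of j k c "Suc (c j)"] by (auto simp: Cset_def)

lemma Cset_dec: "c \<in> Cset k (Suc m) \<Longrightarrow> j < k \<Longrightarrow> 0 < c j \<Longrightarrow> c(j := c j - 1) \<in> Cset k m"
  using sum_upd_nat[of j k c "c j - 1"] by (auto simp: Cset_def)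

lemma Cset_0: "Cset k 0 = {\<lambda>_. 0}"
proof
  show "Cset k 0 \<subseteq> {\<lambda>_. 0}"
  proof
    fix c assume c: "c \<in> Cset k 0"
    have "c j = 0" for j
    proof (cases "j < k")
      case True
      then show ?thesis using c by (simp add: Cset_def)
    next
      case False then show ?thesis using c by (simp add: Cset_def)
    qed
    then show "c \<in> {\<lambda>_. 0}" by auto
  qed
qed (simp add: Cset_def)

lemma wt_upd:
  assumes "j < k" "of_nat (c j + 2) \<noteq> (0::'f::field)"
  shows "wt k (c(j := Suc (c j))) * of_nat (c j + 2) = (wt k c :: 'f)"
proof -
  have r: "(\<Prod>i\<in>{..<k} - {j}. inverse (of_nat (fact ((c(j := Suc (c j))) i + 1))) :: 'f)
      = (\<Prod>i\<in>{..<k} - {j}. inverse (of_nat (fact (c i + 1))))" by (rule prod.cong) auto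
  have "wt k (c(j := Suc (c j))) = inverse (of_nat (fact (c j + 2))) *
      (\<Prod>i\<in>{..<k} - {j}. inverse (of_nat (fact ((c(j := Suc (c j))) i + 1))) :: 'f)"
    unfolding wt_def using assms(1) by (subst prod.remove[of _ j]) auto
  moreover have "wt k c = inverse (of_nat (fact (c j + 1))) * (\<Prod>i\<in>{..<k} - {j}. inverse (of_nat (fact (c i + 1))) :: 'f)"
    unfolding wt_def using assms(1) by (subst prod.remove[of _ j]) auto
  moreover have "inverse (of_nat (fact (c j + 2))) * of_nat (c j + 2) = (inverse (of_nat (fact (c j + 1))) :: 'f)"
  proof -
    have e0: "fact (Suc (Suc (c j))) = Suc (Suc (c j)) * (fact (Suc (c j)) :: nat)"
      by (simp only: fact_Suc of_nat_id)
    have e: "fact (c j + 2) = (c j + 2) * (fact (c j + 1) :: nat)"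
      using e0 by (simp only: Suc_eq_plus1 add.assoc one_add_one)
    have "(of_nat (fact (c j + 2)) :: 'f) = of_nat ((c j + 2) * fact (c j + 1))"
      by (rule arg_cong[of _ _ of_nat, OF e])
    then have "(of_nat (fact (c j + 2)) :: 'f) = of_nat (c j + 2) * of_nat (fact (c j + 1))"
      by (simp only: of_nat_mult)
    then show ?thesis using assms(2) by (simp add: inverse_mult_distrib)
  qed
  ultimately show ?thesis unfolding r by (simp add: mult_ac)
qed

lemma perm_inv:
  assumes "\<And>a i j. set a \<subseteq> A \<Longrightarrow> length a = m \<Longrightarrow> i < j \<Longrightarrow> j < m \<Longrightarrow> F (a[i := a ! j, j := a ! i]) = F a"
  shows "set a \<subseteq> A \<Longrightarrow> length a = m \<Longrightarrow> mset a = mset b \<Longrightarrow> F a = F b"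
  using assms
proof (induction a arbitrary: F m b)
  case Nil then show ?case by simp
next
  case (Cons x a')
  then obtain m' where m: "m = Suc m'" by auto
  have lb: "length b = m" using Cons.prems(2,3) by (metis size_mset)
  have sb: "set b \<subseteq> A" using Cons.prems(1,3) by (metis mset_eq_setD)
  have "x \<in> set b" using Cons.prems(3) by (metis list.set_intros(1) mset_eq_setD)
  then obtain q where q: "q < length b" "b ! q = x" by (auto simp: in_set_conv_nth)
  define b' where "b' = b[0 := b ! q, q := b ! 0]"
  have Fb: "F b' = F b"
  proof (cases "q = 0")
    case True then show ?thesis by (simp add: b'_def)
  next
    case False
    then show ?thesis unfolding b'_def using Cons.prems(4)[OF sb lb, of 0 q] q lb by simp
  qed
  have lb': "length b' = m" using lb by (simp add: b'_def)
  have b'0: "b' ! 0 = x" using q m lb by (cases "q = 0") (auto simp: b'_def nth_list_update)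
  have mb': "mset b' = mset b" unfolding b'_def
    using q lb m by (metis mset_swap zero_less_Suc)
  obtain tb where tb: "b' = x # tb" using lb' m b'0 by (cases b') auto
  have h: "add_mset x (mset a') = add_mset x (mset tb)" using mb' Cons.prems(3) tb by simp
  then have mtb: "mset a' = mset tb" by simp
  have xA: "x \<in> A" using Cons.prems(1) by simp
  have "F (x # a') = F (x # tb)"
  proof (rule Cons.IH[where F = "\<lambda>zs. F (x # zs)" and m = m'])
    show "set a' \<subseteq> A" using Cons.prems(1) by simp
    show "length a' = m'" using Cons.prems(2) m by simp
    show "mset a' = mset tb" by (rule mtb)
    fix zs i j assume zs: "set zs \<subseteq> A" "length zs = m'" "i < j" "j < m'"
    have "F ((x # zs)[Suc i := (x # zs) ! Suc j, Suc j := (x # zs) ! Suc i]) = F (x # zs)"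
      by (rule Cons.prems(4)) (use zs xA m in auto)
    then show "F (x # zs[i := zs ! j, j := zs ! i]) = F (x # zs)" by simp
  qed
  then show ?case using Fb tb by simp
qed


section \<open>The multilinear form T_c\<close>

definition pr :: "(nat \<Rightarrow> nat) \<Rightarrow> nat \<Rightarrow> (nat \<times> nat \<Rightarrow> 'f::zero) \<Rightarrow> nat \<times> nat \<Rightarrow> 'f" where
  "pr n j v = iota n j (comp v j)"

definition dmk :: "nat \<Rightarrow> (nat \<Rightarrow> nat) \<Rightarrow> (nat \<Rightarrow> nat \<times> nat \<Rightarrow> 'f::zero) \<Rightarrow> nat \<times> nat \<Rightarrow> 'f" where
  "dmk k n zs = (\<lambda>(j, c). if j < k \<and> c < n j then zs j (j, c) else 0)"

definition Tc :: "nat \<Rightarrow> (nat \<Rightarrow> nat) \<Rightarrow> nat \<Rightarrow> (nat \<Rightarrow> nat)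
    \<Rightarrow> ((nat \<times> nat \<Rightarrow> 'f::field) list \<Rightarrow> (nat \<times> nat \<Rightarrow> 'f) \<Rightarrow> 'f) \<Rightarrow> (nat \<Rightarrow> nat \<times> nat \<Rightarrow> 'f) \<Rightarrow> 'f" where
  "Tc k n M c \<psi> ys = \<psi> (map (\<lambda>i. pr n (Lc k c ! i) (ys i)) [0..<M]) (dmk k n (\<lambda>j. ys (M + j)))"

definition Pm :: "nat \<Rightarrow> (nat \<Rightarrow> nat) \<Rightarrow> nat \<Rightarrow> ((nat \<times> nat \<Rightarrow> 'f::field) list \<Rightarrow> (nat \<times> nat \<Rightarrow> 'f) \<Rightarrow> 'f)
    \<Rightarrow> (nat \<times> nat \<Rightarrow> 'f) \<Rightarrow> 'f" where
  "Pm k n m \<psi> y = (\<Sum>c\<in>Cset k m. wt k c * \<psi> (map (\<lambda>j. pr n j y) (Lc k c)) y)"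

lemma pr_in: "j < k \<Longrightarrow> pr n j v \<in> Gsum k n"
  by (simp add: pr_def iota_in)
lemma pr_add: "pr n j ((u::nat \<times> nat \<Rightarrow> 'f::ring) + v) = pr n j u + pr n j v"
  by (simp add: pr_def comp_add iota_add)
lemma pr_smul: "pr n j (smul a (u::nat \<times> nat \<Rightarrow> 'f::ring)) = smul a (pr n j u)"
  by (simp add: pr_def comp_smul iota_smul)
lemma sum_pr: "(v::nat \<times> nat \<Rightarrow> 'f::comm_monoid_add) \<in> Gsum k n \<Longrightarrow> (\<Sum>j<k. pr n j v) = v"
  unfolding pr_def by (rule decomp_all[symmetric])
lemma pr_setcomp_other: "i \<noteq> j \<Longrightarrow> pr n i (setcomp n y j u) = pr n i y"
  by (simp add: pr_def comp_setcomp_other)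

lemma dmk_in: "dmk k n zs \<in> Gsum k n"
  by (auto simp: dmk_def Gsum_def idx_def)
lemma dmk_const: "y \<in> Gsum k n \<Longrightarrow> dmk k n (\<lambda>j. y) = y"
  by (auto simp: dmk_def Gsum_def idx_def fun_eq_iff)
lemma dmk_upd: "j < k \<Longrightarrow> dmk k n (zs(j := w)) = setcomp n (dmk k n zs) j (comp w j)"
  by (auto simp: dmk_def setcomp_def comp_def fun_eq_iff)
lemma dmk_cong: "(\<And>j. j < k \<Longrightarrow> zs j = zs' j) \<Longrightarrow> dmk k n zs = dmk k n zs'"
  by (auto simp: dmk_def fun_eq_iff)

lemma map_upt_upd:
  assumes "i < M"
  shows "map (\<lambda>i'. f i' ((g(i := z)) i')) [0..<M] = (map (\<lambda>i'. f i' (g i')) [0..<M])[i := f i z]"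
  by (rule nth_equalityI) (use assms in \<open>auto simp: nth_list_update\<close>)

lemma Tc_list_in:
  assumes "c \<in> Cset k M"
  shows "set (map (\<lambda>i. pr n (Lc k c ! i) (ys i)) [0..<M]) \<subseteq> Gsum k n"
proof -
  have "Lc k c ! i < k" if "i < M" for i using Lc_nth[of i k c] that length_Lc_Cset[OF assms] by simp
  then show ?thesis by (auto simp: pr_in)
qed

lemma Tc_mlin:
  fixes \<psi> :: "(nat \<times> nat \<Rightarrow> 'f::field) list \<Rightarrow> (nat \<times> nat \<Rightarrow> 'f) \<Rightarrow> 'f"
  assumes c: "c \<in> Cset k M" and ml: "multilinear_form k n (Suc M) \<psi>"
  shows "mlin k n {..<M + k} (Tc k n M c \<psi>)"
  unfolding mlin_def
proof (intro conjI allI impI)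
  fix ys ys' :: "nat \<Rightarrow> nat \<times> nat \<Rightarrow> 'f"
  assume e: "\<forall>i\<in>{..<M + k}. ys i = ys' i"
  have m1: "map (\<lambda>i. pr n (Lc k c ! i) (ys i)) [0..<M] = map (\<lambda>i. pr n (Lc k c ! i) (ys' i)) [0..<M]"
    by (rule map_cong[OF refl]) (use e in auto)
  have d1: "dmk k n (\<lambda>j. ys (M + j)) = dmk k n (\<lambda>j. ys' (M + j))"
    using e by (intro dmk_cong) auto
  show "Tc k n M c \<psi> ys = Tc k n M c \<psi> ys'" unfolding Tc_def m1 d1 ..
next
  fix ys :: "nat \<Rightarrow> nat \<times> nat \<Rightarrow> 'f" and i and u v :: "nat \<times> nat \<Rightarrow> 'f"
  assume ys: "\<forall>j\<in>{..<M + k}. ys j \<in> Gsum k n" and i: "i \<in> {..<M + k}"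
    and u: "u \<in> Gsum k n" and v: "v \<in> Gsum k n"
  let ?a = "map (\<lambda>i. pr n (Lc k c ! i) (ys i)) [0..<M]"
  let ?d = "dmk k n (\<lambda>j. ys (M + j))"
  have aG: "set ?a \<subseteq> Gsum k n" by (rule Tc_list_in[OF c])
  have la: "length ?a = M" by simp
  have dG: "?d \<in> Gsum k n" by (rule dmk_in)
  show "Tc k n M c \<psi> (ys(i := u + v)) = Tc k n M c \<psi> (ys(i := u)) + Tc k n M c \<psi> (ys(i := v))"
  proof (cases "i < M")
    case True
    have li: "Lc k c ! i < k" using Lc_nth[of i k c] True length_Lc_Cset[OF c] by simp
    have d: "dmk k n (\<lambda>j. (ys(i := w)) (M + j)) = ?d" for w
      using True by (intro dmk_cong) auto
    have t: "Tc k n M c \<psi> (ys(i := w)) = \<psi> (?a[i := pr n (Lc k c ! i) w]) ?d" for w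
      unfolding Tc_def d map_upt_upd[OF True, where f = "\<lambda>i' w. pr n (Lc k c ! i') w" and g = ys and z = w] ..
    show ?thesis unfolding t pr_add
      by (rule ml_slot_add[OF ml aG _ dG]) (use True la li in \<open>auto simp: pr_in\<close>)
  next
    case False
    then obtain j where j: "i = M + j" "j < k" using i by (metis add_diff_inverse_nat add_less_cancel_left lessThan_iff)
    have m: "map (\<lambda>i'. pr n (Lc k c ! i') ((ys(i := w)) i')) [0..<M] = ?a" for w
      using False by (intro map_cong) auto
    have d: "dmk k n (\<lambda>j'. (ys(i := w)) (M + j')) = setcomp n ?d j (comp w j)" for w
    proof -
      have "(\<lambda>j'. (ys(i := w)) (M + j')) = (\<lambda>j'. ys (M + j'))(j := w)" using j by (auto simp: fun_eq_iff)
      then show ?thesis using dmk_upd[OF j(2)] by simp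
    qed
    have t: "Tc k n M c \<psi> (ys(i := w)) = \<psi> ?a (setcomp n ?d j (comp w j))" for w
      unfolding Tc_def m d ..
    show ?thesis unfolding t comp_add
      by (rule ml_d_add[OF ml aG _ dG j(2)]) (use la u v in \<open>auto simp: comp_Gcomp\<close>)
  qed
next
  fix ys :: "nat \<Rightarrow> nat \<times> nat \<Rightarrow> 'f" and i and u :: "nat \<times> nat \<Rightarrow> 'f" and s :: 'f
  assume ys: "\<forall>j\<in>{..<M + k}. ys j \<in> Gsum k n" and i: "i \<in> {..<M + k}"
    and u: "u \<in> Gsum k n"
  let ?a = "map (\<lambda>i. pr n (Lc k c ! i) (ys i)) [0..<M]"
  let ?d = "dmk k n (\<lambda>j. ys (M + j))"
  have aG: "set ?a \<subseteq> Gsum k n" by (rule Tc_list_in[OF c])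
  have la: "length ?a = M" by simp
  have dG: "?d \<in> Gsum k n" by (rule dmk_in)
  show "Tc k n M c \<psi> (ys(i := smul s u)) = s * Tc k n M c \<psi> (ys(i := u))"
  proof (cases "i < M")
    case True
    have li: "Lc k c ! i < k" using Lc_nth[of i k c] True length_Lc_Cset[OF c] by simp
    have d: "dmk k n (\<lambda>j. (ys(i := w)) (M + j)) = ?d" for w
      using True by (intro dmk_cong) auto
    have t: "Tc k n M c \<psi> (ys(i := w)) = \<psi> (?a[i := pr n (Lc k c ! i) w]) ?d" for w
      unfolding Tc_def d map_upt_upd[OF True, where f = "\<lambda>i' w. pr n (Lc k c ! i') w" and g = ys and z = w] ..
    show ?thesis unfolding t pr_smul
      by (rule ml_slot_smul[OF ml aG _ dG]) (use True la li in \<open>auto simp: pr_in\<close>)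
  next
    case False
    then obtain j where j: "i = M + j" "j < k" using i by (metis add_diff_inverse_nat add_less_cancel_left lessThan_iff)
    have m: "map (\<lambda>i'. pr n (Lc k c ! i') ((ys(i := w)) i')) [0..<M] = ?a" for w
      using False by (intro map_cong) auto
    have d: "dmk k n (\<lambda>j'. (ys(i := w)) (M + j')) = setcomp n ?d j (comp w j)" for w
    proof -
      have "(\<lambda>j'. (ys(i := w)) (M + j')) = (\<lambda>j'. ys (M + j'))(j := w)" using j by (auto simp: fun_eq_iff)
      then show ?thesis using dmk_upd[OF j(2)] by simp
    qed
    have t: "Tc k n M c \<psi> (ys(i := w)) = \<psi> ?a (setcomp n ?d j (comp w j))" for w
      unfolding Tc_def m d ..
    show ?thesis unfolding t comp_smul
      by (rule ml_d_smul[OF ml aG _ dG j(2)]) (use la u in \<open>auto simp: comp_Gcomp\<close>)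
  qed
qed

lemma map_Lc_nth: "map (\<lambda>i. f (Lc k c ! i)) [0..<length (Lc k c)] = map f (Lc k c)"
  by (rule nth_equalityI) auto

lemma Tc_diag:
  assumes "c \<in> Cset k M" "y \<in> Gsum k n"
  shows "Tc k n M c \<psi> (\<lambda>i. y) = \<psi> (map (\<lambda>j. pr n j y) (Lc k c)) y"
  unfolding Tc_def dmk_const[OF assms(2)] using map_Lc_nth[of "\<lambda>j. pr n j y" k c] length_Lc_Cset[OF assms(1)]
  by simp

lemma Tc_slot_a:
  assumes "c \<in> Cset k M" "s < M"
  shows "Tc k n M c \<psi> ((\<lambda>i. y)(s := b)) = \<psi> ((map (\<lambda>j. pr n j y) (Lc k c))[s := pr n (Lc k c ! s) b]) (dmk k n (\<lambda>j. y))"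
proof -
  have "map (\<lambda>i. pr n (Lc k c ! i) (((\<lambda>i. y)(s := b)) i)) [0..<M] = (map (\<lambda>i. pr n (Lc k c ! i) y) [0..<M])[s := pr n (Lc k c ! s) b]"
    by (rule map_upt_upd[OF assms(2), where f = "\<lambda>i' w. pr n (Lc k c ! i') w" and g = "\<lambda>i. y" and z = b])
  also have "map (\<lambda>i. pr n (Lc k c ! i) y) [0..<M] = map (\<lambda>j. pr n j y) (Lc k c)"
    using map_Lc_nth[of "\<lambda>j. pr n j y" k c] length_Lc_Cset[OF assms(1)] by simp
  finally have m: "map (\<lambda>i. pr n (Lc k c ! i) (((\<lambda>i. y)(s := b)) i)) [0..<M] = (map (\<lambda>j. pr n j y) (Lc k c))[s := pr n (Lc k c ! s) b]" .
  have d: "dmk k n (\<lambda>j. ((\<lambda>i. y)(s := b)) (M + j)) = dmk k n (\<lambda>j. y)"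
    using assms(2) by (intro dmk_cong) auto
  show ?thesis unfolding Tc_def m d ..
qed

lemma Tc_slot_d:
  assumes "c \<in> Cset k M" "j < k" "y \<in> Gsum k n"
  shows "Tc k n M c \<psi> ((\<lambda>i. y)(M + j := b)) = \<psi> (map (\<lambda>j. pr n j y) (Lc k c)) (setcomp n y j (comp b j))"
proof -
  have "map (\<lambda>i. pr n (Lc k c ! i) (((\<lambda>i. y)(M + j := b)) i)) [0..<M] = map (\<lambda>i. pr n (Lc k c ! i) y) [0..<M]"
    by (intro map_cong) auto
  also have "\<dots> = map (\<lambda>j. pr n j y) (Lc k c)"
    using map_Lc_nth[of "\<lambda>j. pr n j y" k c] length_Lc_Cset[OF assms(1)] by simp
  finally have m: "map (\<lambda>i. pr n (Lc k c ! i) (((\<lambda>i. y)(M + j := b)) i)) [0..<M] = map (\<lambda>j. pr n j y) (Lc k c)" .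
  have "(\<lambda>j'. ((\<lambda>i. y)(M + j := b)) (M + j')) = (\<lambda>j'. y)(j := b)" by (auto simp: fun_eq_iff)
  then have d: "dmk k n (\<lambda>j'. ((\<lambda>i. y)(M + j := b)) (M + j')) = setcomp n y j (comp b j)"
    using dmk_upd[OF assms(2), of n "\<lambda>j'. y" b] dmk_const[OF assms(3)] by simp
  show ?thesis unfolding Tc_def m d ..
qed


definition symH :: "nat \<Rightarrow> (nat \<Rightarrow> nat) \<Rightarrow> nat \<Rightarrow> ((nat \<times> nat \<Rightarrow> 'f::field) list \<Rightarrow> (nat \<times> nat \<Rightarrow> 'f) \<Rightarrow> 'f) \<Rightarrow> bool" where
  "symH k n m \<psi> \<longleftrightarrow> (\<forall>a d i j. set a \<subseteq> Gsum k n \<longrightarrow> length a = m \<longrightarrow> d \<in> Gsum k n \<longrightarrow>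
      i < j \<longrightarrow> j < m \<longrightarrow> \<psi> (a[i := a ! j, j := a ! i]) d = \<psi> a d)"

definition swapH :: "nat \<Rightarrow> (nat \<Rightarrow> nat) \<Rightarrow> nat \<Rightarrow> ((nat \<times> nat \<Rightarrow> 'f::field) list \<Rightarrow> (nat \<times> nat \<Rightarrow> 'f) \<Rightarrow> 'f) \<Rightarrow> bool" where
  "swapH k n m \<psi> \<longleftrightarrow> (\<forall>a d i j u. set a \<subseteq> Gsum k n \<longrightarrow> length a = m \<longrightarrow> d \<in> Gsum k n \<longrightarrow>
      i < m \<longrightarrow> j < k \<longrightarrow> u \<in> Gcomp n j \<longrightarrow>
      \<psi> (a[i := iota n j u]) d = \<psi> (a[i := iota n j (comp d j)]) (setcomp n d j u))"

lemma psi_mset: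
  assumes "symH k n m \<psi>" "set a \<subseteq> Gsum k n" "length a = m" "d \<in> Gsum k n" "mset a = mset b"
  shows "\<psi> a d = \<psi> b d"
  by (rule perm_inv[where F = "\<lambda>a. \<psi> a d" and A = "Gsum k n" and m = m])
    (use assms in \<open>auto simp: symH_def\<close>)

lemma ml_b:
  fixes \<psi> :: "(nat \<times> nat \<Rightarrow> 'f::field) list \<Rightarrow> (nat \<times> nat \<Rightarrow> 'f) \<Rightarrow> 'f"
  assumes "multilinear_form k n (Suc (Suc m)) \<psi>" "b \<in> Gsum k n"
  shows "multilinear_form k n (Suc m) (\<lambda>a d. \<psi> (a @ [b]) d)"
  unfolding multilinear_form_def
proof (rule conjI; intro allI impI)
  fix a :: "(nat \<times> nat \<Rightarrow> 'f) list" and d :: "nat \<times> nat \<Rightarrow> 'f" and i and u v :: "nat \<times> nat \<Rightarrow> 'f" and s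
  assume h: "set a \<subseteq> Gsum k n \<and> length a = Suc m - 1 \<and> d \<in> Gsum k n \<and> i < Suc m - 1 \<and>
       u \<in> Gsum k n \<and> v \<in> Gsum k n"
  then have e: "a[i := w] @ [b] = (a @ [b])[i := w]" for w by (simp add: list_update_append1)
  have h2: "set (a @ [b]) \<subseteq> Gsum k n \<and> length (a @ [b]) = Suc (Suc m) - 1 \<and> d \<in> Gsum k n \<and> i < Suc (Suc m) - 1 \<and>
       u \<in> Gsum k n \<and> v \<in> Gsum k n" using h assms(2) by auto
  show "\<psi> (a[i := addp u v] @ [b]) d = \<psi> (a[i := u] @ [b]) d + \<psi> (a[i := v] @ [b]) d \<and>
        \<psi> (a[i := smul s u] @ [b]) d = s * \<psi> (a[i := u] @ [b]) d"
    unfolding e using assms(1) h2 unfolding multilinear_form_def by blast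
next
  fix a :: "(nat \<times> nat \<Rightarrow> 'f) list" and d :: "nat \<times> nat \<Rightarrow> 'f" and j and u v :: "nat \<Rightarrow> 'f" and s
  assume h: "set a \<subseteq> Gsum k n \<and> length a = Suc m - 1 \<and> d \<in> Gsum k n \<and> j < k \<and> u \<in> Gcomp n j \<and> v \<in> Gcomp n j"
  have h2: "set (a @ [b]) \<subseteq> Gsum k n \<and> length (a @ [b]) = Suc (Suc m) - 1 \<and> d \<in> Gsum k n \<and> j < k \<and> u \<in> Gcomp n j \<and> v \<in> Gcomp n j"
    using h assms(2) by auto
  show "\<psi> (a @ [b]) (setcomp n d j (addp u v)) = \<psi> (a @ [b]) (setcomp n d j u) + \<psi> (a @ [b]) (setcomp n d j v) \<and>
        \<psi> (a @ [b]) (setcomp n d j (smul s u)) = s * \<psi> (a @ [b]) (setcomp n d j u)"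
    using assms(1) h2 unfolding multilinear_form_def by blast
qed

lemma sym_b:
  fixes \<psi> :: "(nat \<times> nat \<Rightarrow> 'f::field) list \<Rightarrow> (nat \<times> nat \<Rightarrow> 'f) \<Rightarrow> 'f"
  assumes "symH k n (Suc m) \<psi>" "b \<in> Gsum k n"
  shows "symH k n m (\<lambda>a d. \<psi> (a @ [b]) d)"
  unfolding symH_def
proof (intro allI impI)
  fix a :: "(nat \<times> nat \<Rightarrow> 'f) list" and d :: "nat \<times> nat \<Rightarrow> 'f" and i j
  assume h: "set a \<subseteq> Gsum k n" "length a = m" "d \<in> Gsum k n" "i < j" "j < m"
  have e: "a[i := a ! j, j := a ! i] @ [b] = (a @ [b])[i := (a @ [b]) ! j, j := (a @ [b]) ! i]"
    using h by (simp add: list_update_append1 nth_append)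
  show "\<psi> (a[i := a ! j, j := a ! i] @ [b]) d = \<psi> (a @ [b]) d"
    unfolding e using assms h unfolding symH_def by simp
qed

lemma swap_b:
  fixes \<psi> :: "(nat \<times> nat \<Rightarrow> 'f::field) list \<Rightarrow> (nat \<times> nat \<Rightarrow> 'f) \<Rightarrow> 'f"
  assumes "swapH k n (Suc m) \<psi>" "b \<in> Gsum k n"
  shows "swapH k n m (\<lambda>a d. \<psi> (a @ [b]) d)"
  unfolding swapH_def
proof (intro allI impI)
  fix a :: "(nat \<times> nat \<Rightarrow> 'f) list" and d :: "nat \<times> nat \<Rightarrow> 'f" and i j and u :: "nat \<Rightarrow> 'f"
  assume h: "set a \<subseteq> Gsum k n" "length a = m" "d \<in> Gsum k n" "i < m" "j < k" "u \<in> Gcomp n j"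
  have e: "a[i := w] @ [b] = (a @ [b])[i := w]" for w using h by (simp add: list_update_append1)
  show "\<psi> (a[i := iota n j u] @ [b]) d = \<psi> (a[i := iota n j (comp d j)] @ [b]) (setcomp n d j u)"
    unfolding e using assms h unfolding swapH_def by simp
qed

context
  fixes k :: nat and n :: "nat \<Rightarrow> nat" and M :: nat
    and \<psi> :: "(nat \<times> nat \<Rightarrow> 'f::field) list \<Rightarrow> (nat \<times> nat \<Rightarrow> 'f) \<Rightarrow> 'f"
  assumes ml: "multilinear_form k n (Suc M) \<psi>" and sy: "symH k n M \<psi>" and sw: "swapH k n M \<psi>"
begin

definition Hc :: "(nat \<Rightarrow> nat) \<Rightarrow> (nat \<times> nat \<Rightarrow> 'f) \<Rightarrow> (nat \<times> nat \<Rightarrow> 'f) \<Rightarrow> nat \<Rightarrow> 'f" where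
  "Hc c y b j = \<psi> (map (\<lambda>j. pr n j y) (Lc k (c(j := c j - 1))) @ [pr n j b]) y"

lemma comb_a:
  assumes c: "c \<in> Cset k M" and s: "s < M" and y: "y \<in> Gsum k n"
  shows "\<psi> ((map (\<lambda>j. pr n j y) (Lc k c))[s := pr n (Lc k c ! s) b]) y = Hc c y b (Lc k c ! s)"
proof -
  let ?L = "Lc k c"
  let ?j = "Lc k c ! s"
  let ?c' = "c(?j := c ?j - 1)"
  have ls: "s < length ?L" using s length_Lc_Cset[OF c] by simp
  have jL: "?j \<in> set ?L" using ls by simp
  then have jk: "?j < k" and cj: "0 < c ?j" by (auto simp: set_Lc)
  have cc: "?c'(?j := Suc (?c' ?j)) = c" using cj by (auto simp: fun_eq_iff)
  have mL: "mset ?L = add_mset ?j (mset (Lc k ?c'))"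
    using mset_Lc_upd[OF jk, of ?c'] unfolding cc .
  let ?A = "map (\<lambda>j. pr n j y) ?L"
  have "mset (?A[s := pr n ?j b]) = add_mset (pr n ?j b) (mset ?A - {#?A ! s#})"
    by (rule mset_update) (simp add: ls)
  also have "mset ?A - {#?A ! s#} = image_mset (\<lambda>j. pr n j y) (mset (Lc k ?c'))"
    using ls by (simp add: mL)
  finally have m1: "mset (?A[s := pr n ?j b]) = mset (map (\<lambda>j. pr n j y) (Lc k ?c') @ [pr n ?j b])"
    by simp
  have sA: "set (?A[s := pr n ?j b]) \<subseteq> Gsum k n"
  proof -
    have "set ?A \<subseteq> Gsum k n" by (auto simp: set_Lc pr_in)
    moreover have "pr n ?j b \<in> Gsum k n" by (rule pr_in[OF jk])
    ultimately show ?thesis using set_update_subset_insert[of ?A s "pr n ?j b"] by blast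
  qed
  have lA: "length (?A[s := pr n ?j b]) = M" using length_Lc_Cset[OF c] by simp
  show ?thesis unfolding Hc_def by (rule psi_mset[OF sy sA lA y m1])
qed

lemma comb_b:
  assumes c: "c \<in> Cset k M" and y: "y \<in> Gsum k n"
  shows "(\<Sum>s<M. \<psi> ((map (\<lambda>j. pr n j y) (Lc k c))[s := pr n (Lc k c ! s) b]) y)
       = (\<Sum>j<k. of_nat (c j) * Hc c y b j)"
proof -
  have "(\<Sum>s<M. \<psi> ((map (\<lambda>j. pr n j y) (Lc k c))[s := pr n (Lc k c ! s) b]) y)
      = (\<Sum>s<M. Hc c y b (Lc k c ! s))"
    by (rule sum.cong[OF refl]) (use comb_a[OF c _ y] in auto)
  also have "\<dots> = sum_list (map (Hc c y b) (Lc k c))"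
    unfolding sum_list_sum_nth using length_Lc_Cset[OF c] by (simp add: atLeast0LessThan)
  also have "\<dots> = (\<Sum>j<k. of_nat (c j) * Hc c y b j)" by (rule sum_list_Lc)
  finally show ?thesis .
qed

lemma comb_c:
  assumes c: "c \<in> Cset k M" and y: "y \<in> Gsum k n" and b: "b \<in> Gsum k n" and j: "j < k" and cj: "0 < c j"
  shows "\<psi> (map (\<lambda>j. pr n j y) (Lc k c)) (setcomp n y j (comp b j)) = Hc c y b j"
proof -
  let ?L = "Lc k c"
  let ?A = "map (\<lambda>j. pr n j y) ?L"
  have "j \<in> set ?L" using j cj by (simp add: set_Lc)
  then obtain s where s: "s < length ?L" "?L ! s = j" by (auto simp: in_set_conv_nth)
  have sM: "s < M" using s length_Lc_Cset[OF c] by simp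
  have AG: "set ?A \<subseteq> Gsum k n" by (auto simp: set_Lc pr_in)
  have lA: "length ?A = M" using length_Lc_Cset[OF c] by simp
  let ?d = "setcomp n y j (comp b j)"
  have dG: "?d \<in> Gsum k n" using y j by (rule setcomp_in)
  have cb: "comp b j \<in> Gcomp n j" using b by (rule comp_Gcomp)
  have cy: "comp y j \<in> Gcomp n j" using y by (rule comp_Gcomp)
  have "\<psi> (?A[s := iota n j (comp y j)]) ?d = \<psi> (?A[s := iota n j (comp ?d j)]) (setcomp n ?d j (comp y j))"
    using sw AG lA dG sM j cy unfolding swapH_def by blast
  moreover have "?A[s := iota n j (comp y j)] = ?A"
  proof -
    have "?A ! s = iota n j (comp y j)" using s by (simp add: pr_def)
    then show ?thesis by (metis list_update_id)
  qed
  moreover have "comp ?d j = comp b j" by (rule comp_setcomp_same[OF cb])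
  moreover have "setcomp n ?d j (comp y j) = y" by (simp add: setcomp_setcomp setcomp_comp[OF y])
  ultimately have "\<psi> ?A ?d = \<psi> (?A[s := pr n (?L ! s) b]) y" using s by (simp add: pr_def)
  also have "\<dots> = Hc c y b (?L ! s)" by (rule comb_a[OF c sM y])
  finally show ?thesis using s by simp
qed

lemma comb_d:
  assumes c: "c \<in> Cset k M" and y: "y \<in> Gsum k n" and b: "b \<in> Gsum k n"
  shows "(\<Sum>s<M. \<psi> ((map (\<lambda>j. pr n j y) (Lc k c))[s := pr n (Lc k c ! s) b]) y)
     + (\<Sum>j<k. \<psi> (map (\<lambda>j. pr n j y) (Lc k c)) (setcomp n y j (comp b j)))
     = (\<Sum>j<k. if 0 < c j then of_nat (c j + 1) * Hc c y b j else 0)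
     + (\<Sum>j<k. if c j = 0 then \<psi> (map (\<lambda>j. pr n j y) (Lc k c)) (setcomp n y j (comp b j)) else 0)"
proof -
  have "(\<Sum>j<k. of_nat (c j) * Hc c y b j) + (\<Sum>j<k. \<psi> (map (\<lambda>j. pr n j y) (Lc k c)) (setcomp n y j (comp b j)))
      = (\<Sum>j<k. of_nat (c j) * Hc c y b j + \<psi> (map (\<lambda>j. pr n j y) (Lc k c)) (setcomp n y j (comp b j)))"
    by (simp add: sum.distrib)
  also have "\<dots> = (\<Sum>j<k. (if 0 < c j then of_nat (c j + 1) * Hc c y b j else 0)
      + (if c j = 0 then \<psi> (map (\<lambda>j. pr n j y) (Lc k c)) (setcomp n y j (comp b j)) else 0))"
  proof (rule sum.cong[OF refl])
    fix j assume j: "j \<in> {..<k}"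
    show "of_nat (c j) * Hc c y b j + \<psi> (map (\<lambda>j. pr n j y) (Lc k c)) (setcomp n y j (comp b j))
      = (if 0 < c j then of_nat (c j + 1) * Hc c y b j else 0)
      + (if c j = 0 then \<psi> (map (\<lambda>j. pr n j y) (Lc k c)) (setcomp n y j (comp b j)) else 0)"
    proof (cases "c j = 0")
      case True then show ?thesis by simp
    next
      case False
      then have "\<psi> (map (\<lambda>j. pr n j y) (Lc k c)) (setcomp n y j (comp b j)) = Hc c y b j"
        using comb_c[OF c y b] j by simp
      then show ?thesis using False by (simp add: distrib_right)
    qed
  qed
  finally show ?thesis unfolding comb_b[OF c y] by (simp add: sum.distrib)
qed


lemma comb_T7:
  assumes M: "M = Suc m" and y: "y \<in> Gsum k n" and b: "b \<in> Gsum k n"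
    and ch: "\<And>t. 0 < t \<Longrightarrow> t \<le> Suc M \<Longrightarrow> of_nat t \<noteq> (0::'f)"
  shows "(\<Sum>c\<in>Cset k M. wt k c * (\<Sum>j<k. if 0 < c j then of_nat (c j + 1) * Hc c y b j else 0))
       = Pm k n m (\<lambda>a d. \<psi> (a @ [b]) d) y"
proof -
  let ?g = "\<lambda>j c'. wt k c' * \<psi> (map (\<lambda>j. pr n j y) (Lc k c') @ [pr n j b]) y"
  have "(\<Sum>c\<in>Cset k M. wt k c * (\<Sum>j<k. if 0 < c j then of_nat (c j + 1) * Hc c y b j else 0))
      = (\<Sum>j<k. \<Sum>c\<in>Cset k M. if 0 < c j then wt k c * (of_nat (c j + 1) * Hc c y b j) else 0)"
    unfolding sum_distrib_left by (subst sum.swap) (rule sum.cong[OF refl], rule sum.cong[OF refl], simp)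
  also have "\<dots> = (\<Sum>j<k. \<Sum>c'\<in>Cset k m. ?g j c')"
  proof (rule sum.cong[OF refl])
    fix j assume j: "j \<in> {..<k}"
    have "(\<Sum>c\<in>Cset k M. if 0 < c j then wt k c * (of_nat (c j + 1) * Hc c y b j) else 0)
        = (\<Sum>c\<in>{c \<in> Cset k M. 0 < c j}. wt k c * (of_nat (c j + 1) * Hc c y b j))"
      by (rule sum.inter_filter[symmetric]) (rule finite_Cset)
    also have "\<dots> = (\<Sum>c'\<in>Cset k m. ?g j c')"
    proof (rule sum.reindex_bij_witness[where i = "\<lambda>c'. c'(j := Suc (c' j))" and j = "\<lambda>c. c(j := c j - 1)"])
      fix c assume c: "c \<in> {c \<in> Cset k M. 0 < c j}"
      then show "(c(j := c j - 1))(j := Suc ((c(j := c j - 1)) j)) = c" by (auto simp: fun_eq_iff)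
    next
      fix c assume c: "c \<in> {c \<in> Cset k M. 0 < c j}"
      show "c(j := c j - 1) \<in> Cset k m" using c j M Cset_dec[of c k m j] by auto
    next
      fix c' assume c': "c' \<in> Cset k m"
      show "(c'(j := Suc (c' j)))(j := (c'(j := Suc (c' j))) j - 1) = c'" by (auto simp: fun_eq_iff)
    next
      fix c' assume c': "c' \<in> Cset k m"
      show "c'(j := Suc (c' j)) \<in> {c \<in> Cset k M. 0 < c j}" using Cset_upd[OF c'] j M by auto
    next
      fix c assume c: "c \<in> {c \<in> Cset k M. 0 < c j}"
      have cjM: "c j \<le> M"
      proof -
        have "c j \<le> sum c {..<k}" by (rule member_le_sum) (use j in auto)
        then show ?thesis using c by (simp add: Cset_def)
      qed
      let ?c'' = "c(j := c j - 1)"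
      have e1: "?c''(j := Suc (?c'' j)) = c" using c by (auto simp: fun_eq_iff)
      have e2: "?c'' j + 2 = c j + 1" using c by simp
      have "of_nat (c j + 1) \<noteq> (0::'f)" by (rule ch) (use cjM in auto)
      then have nz: "of_nat (?c'' j + 2) \<noteq> (0::'f)" unfolding e2 .
      have w: "wt k c * of_nat (c j + 1) = (wt k ?c'' :: 'f)"
        using wt_upd[of j k ?c'', OF _ nz] j unfolding e1 e2 by simp
      show "?g j (c(j := c j - 1)) = wt k c * (of_nat (c j + 1) * Hc c y b j)"
        unfolding Hc_def w[symmetric] by (simp add: mult.assoc)
    qed
    finally show "(\<Sum>c\<in>Cset k M. if 0 < c j then wt k c * (of_nat (c j + 1) * Hc c y b j) else 0)
        = (\<Sum>c'\<in>Cset k m. ?g j c')" .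
  qed
  also have "\<dots> = (\<Sum>c'\<in>Cset k m. wt k c' * (\<Sum>j<k. \<psi> (map (\<lambda>j. pr n j y) (Lc k c') @ [pr n j b]) y))"
    unfolding sum_distrib_left by (rule sum.swap)
  also have "\<dots> = (\<Sum>c'\<in>Cset k m. wt k c' * \<psi> (map (\<lambda>j. pr n j y) (Lc k c') @ [b]) y)"
  proof (rule sum.cong[OF refl])
    fix c' assume c': "c' \<in> Cset k m"
    let ?B = "map (\<lambda>j. pr n j y) (Lc k c')"
    have lB: "length ?B = m" using length_Lc_Cset[OF c'] by simp
    have sB: "set (?B @ [b]) \<subseteq> Gsum k n" using b by (auto simp: set_Lc pr_in)
    have "\<psi> ((?B @ [b])[m := \<Sum>j<k. pr n j b]) y = (\<Sum>j<k. \<psi> ((?B @ [b])[m := pr n j b]) y)"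
      by (rule ml_slot_sum[OF ml sB _ y]) (use lB M in \<open>auto simp: pr_in\<close>)
    moreover have "(?B @ [b])[m := w] = ?B @ [w]" for w using list_update_length[of ?B b "[]" w] lB by simp
    ultimately have "\<psi> (?B @ [b]) y = (\<Sum>j<k. \<psi> (?B @ [pr n j b]) y)" by (simp add: sum_pr[OF b])
    then show "wt k c' * (\<Sum>j<k. \<psi> (?B @ [pr n j b]) y) = wt k c' * \<psi> (?B @ [b]) y" by simp
  qed
  also have "\<dots> = Pm k n m (\<lambda>a d. \<psi> (a @ [b]) d) y" by (simp add: Pm_def)
  finally show ?thesis .
qed

definition J1 :: "(nat \<times> nat \<Rightarrow> 'f) \<Rightarrow> (nat \<times> nat \<Rightarrow> 'f) \<Rightarrow> 'f" where
  "J1 b y = (\<Sum>c\<in>Cset k M. wt k c * (\<Sum>s<M + k.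
      Tc k n M c \<psi> ((\<lambda>i. y + (if i < s then b else 0))(s := b)) - Tc k n M c \<psi> ((\<lambda>i. y)(s := b))))"

definition J2 :: "(nat \<times> nat \<Rightarrow> 'f) \<Rightarrow> (nat \<times> nat \<Rightarrow> 'f) \<Rightarrow> 'f" where
  "J2 b y = (\<Sum>c\<in>Cset k M. wt k c * (\<Sum>j<k.
      if c j = 0 then \<psi> (map (\<lambda>j. pr n j y) (Lc k c)) (setcomp n y j (comp b j)) else 0))"

lemma sum_split_add: "(\<Sum>s<(a::nat) + b. f s) = (\<Sum>s<a. f s) + (\<Sum>j<b. f (a + j))"
  by (induction b) (simp_all add: add.assoc)

lemma J1_deg:
  assumes b: "b \<in> Gsum k n"
  shows "deg_le k n (M + k - 2) (J1 b)"
  unfolding J1_def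
proof (intro deg_sum deg_scale)
  fix c s assume c: "c \<in> Cset k M" and s: "s \<in> {..<M + k}"
  have ml1: "mlin k n ({..<M + k} - {s}) (\<lambda>ys. Tc k n M c \<psi> (ys(s := b)))"
    by (rule mlin_fix[OF Tc_mlin[OF c ml] b])
  have "deg_le k n (card ({..<M + k} - {s}) - 1)
     (\<lambda>y. (\<lambda>ys. Tc k n M c \<psi> (ys(s := b))) (\<lambda>i. y + (if i < s then b else 0)) - (\<lambda>ys. Tc k n M c \<psi> (ys(s := b))) (\<lambda>i. y))"
    by (rule shift_diag[OF _ ml1]) (use b in \<open>auto simp: Gsum_zero\<close>)
  moreover have "card ({..<M + k} - {s}) - 1 = M + k - 2" using s by simp
  ultimately show "deg_le k n (M + k - 2) (\<lambda>y. Tc k n M c \<psi> ((\<lambda>i. y + (if i < s then b else 0))(s := b)) - Tc k n M c \<psi> ((\<lambda>i. y)(s := b)))"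
    by simp
qed

lemma J2_term_indep:
  assumes c: "c \<in> Cset k M" and cj: "c j = 0"
  shows "indep k n j (\<lambda>y. \<psi> (map (\<lambda>j. pr n j y) (Lc k c)) (setcomp n y j (comp b j)))"
  unfolding indep_def
proof
  fix z :: "nat \<times> nat \<Rightarrow> 'f" assume z: "z \<in> Gsum k n"
  have me: "map (\<lambda>i. pr n i (setcomp n z j 0)) (Lc k c) = map (\<lambda>i. pr n i z) (Lc k c)"
  proof (rule map_cong[OF refl])
    fix i assume "i \<in> set (Lc k c)"
    then have "i \<noteq> j" using cj by (auto simp: set_Lc)
    then show "pr n i (setcomp n z j 0) = pr n i z" by (rule pr_setcomp_other)
  qed
  show "\<psi> (map (\<lambda>i. pr n i (setcomp n z j 0)) (Lc k c)) (setcomp n (setcomp n z j 0) j (comp b j))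
      = \<psi> (map (\<lambda>i. pr n i z) (Lc k c)) (setcomp n z j (comp b j))"
    unfolding me setcomp_setcomp ..
qed

lemma Pm_Tc: "y \<in> Gsum k n \<Longrightarrow> Pm k n M \<psi> y = (\<Sum>c\<in>Cset k M. wt k c * Tc k n M c \<psi> (\<lambda>i. y))"
  unfolding Pm_def by (rule sum.cong[OF refl]) (simp add: Tc_diag)

lemma decomp:
  assumes M: "M = Suc m" and y: "y \<in> Gsum k n" and b: "b \<in> Gsum k n"
    and ch: "\<And>t. 0 < t \<Longrightarrow> t \<le> Suc M \<Longrightarrow> of_nat t \<noteq> (0::'f)"
  shows "Delta b (Pm k n M \<psi>) y = Pm k n m (\<lambda>a d. \<psi> (a @ [b]) d) y + J1 b y + J2 b y"
proof -
  have yb: "y + b \<in> Gsum k n" using y b by (rule Gsum_add)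
  have per_c: "Tc k n M c \<psi> (\<lambda>i. y + b) - Tc k n M c \<psi> (\<lambda>i. y)
     = ((\<Sum>j<k. if 0 < c j then of_nat (c j + 1) * Hc c y b j else 0)
       + (\<Sum>j<k. if c j = 0 then \<psi> (map (\<lambda>j. pr n j y) (Lc k c)) (setcomp n y j (comp b j)) else 0))
       + (\<Sum>s<M + k. Tc k n M c \<psi> ((\<lambda>i. y + (if i < s then b else 0))(s := b)) - Tc k n M c \<psi> ((\<lambda>i. y)(s := b)))"
    if c: "c \<in> Cset k M" for c
  proof -
    have "Tc k n M c \<psi> (\<lambda>i. y + b) - Tc k n M c \<psi> (\<lambda>i. y)
        = (\<Sum>s\<in>{..<M + k}. Tc k n M c \<psi> (\<lambda>i. if i = s then (y + b) - y else if i < s then y + b else y))"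
      by (rule telescope[OF _ Tc_mlin[OF c ml], where us = "\<lambda>i. y + b" and vs = "\<lambda>i. y"]) (simp_all add: yb y)
    also have "\<dots> = (\<Sum>s<M + k. Tc k n M c \<psi> ((\<lambda>i. y + (if i < s then b else 0))(s := b)))"
    proof (rule sum.cong[OF refl])
      fix s :: nat
      have "(\<lambda>i. if i = s then (y + b) - y else if i < s then y + b else y) = (\<lambda>i. y + (if i < s then b else 0))(s := b)"
        by (auto simp: fun_eq_iff)
      then show "Tc k n M c \<psi> (\<lambda>i. if i = s then (y + b) - y else if i < s then y + b else y)
          = Tc k n M c \<psi> ((\<lambda>i. y + (if i < s then b else 0))(s := b))" by simp
    qed
    also have "\<dots> = (\<Sum>s<M + k. Tc k n M c \<psi> ((\<lambda>i. y)(s := b)))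
        + (\<Sum>s<M + k. Tc k n M c \<psi> ((\<lambda>i. y + (if i < s then b else 0))(s := b)) - Tc k n M c \<psi> ((\<lambda>i. y)(s := b)))"
      by (simp add: sum_subtractf)
    also have "(\<Sum>s<M + k. Tc k n M c \<psi> ((\<lambda>i. y)(s := b)))
        = (\<Sum>s<M. \<psi> ((map (\<lambda>j. pr n j y) (Lc k c))[s := pr n (Lc k c ! s) b]) y)
        + (\<Sum>j<k. \<psi> (map (\<lambda>j. pr n j y) (Lc k c)) (setcomp n y j (comp b j)))"
      unfolding sum_split_add
      by (rule arg_cong2[where f = "(+)"], rule sum.cong[OF refl])
        (simp_all add: Tc_slot_a[OF c] dmk_const[OF y] Tc_slot_d[OF c _ y])
    also have "\<dots> = (\<Sum>j<k. if 0 < c j then of_nat (c j + 1) * Hc c y b j else 0)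
       + (\<Sum>j<k. if c j = 0 then \<psi> (map (\<lambda>j. pr n j y) (Lc k c)) (setcomp n y j (comp b j)) else 0)"
      by (rule comb_d[OF c y b])
    finally show ?thesis .
  qed
  have "Delta b (Pm k n M \<psi>) y = (\<Sum>c\<in>Cset k M. wt k c * (Tc k n M c \<psi> (\<lambda>i. y + b) - Tc k n M c \<psi> (\<lambda>i. y)))"
    unfolding Delta_apply Pm_Tc[OF yb] Pm_Tc[OF y] by (simp add: sum_subtractf right_diff_distrib)
  also have "\<dots> = (\<Sum>c\<in>Cset k M. wt k c * (\<Sum>j<k. if 0 < c j then of_nat (c j + 1) * Hc c y b j else 0))
      + J2 b y + J1 b y"
    unfolding J1_def J2_def by (simp add: per_c sum.distrib distrib_left)
  also have "(\<Sum>c\<in>Cset k M. wt k c * (\<Sum>j<k. if 0 < c j then of_nat (c j + 1) * Hc c y b j else 0))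
      = Pm k n m (\<lambda>a d. \<psi> (a @ [b]) d) y"
    by (rule comb_T7[OF M y b ch])
  finally show ?thesis by (simp add: algebra_simps)
qed

end


lemma Deltas_if: "Deltas hs (\<lambda>y. if P then F y else (0::'f::ab_group_add)) = (\<lambda>y. if P then Deltas hs F y else 0)"
  by (cases P) (simp_all add: Deltas_zero)
lemma W_zero: "W j n (\<lambda>y. 0::'f::ab_group_add) = (\<lambda>x. 0)"
  by (induction j) auto
lemma W_if: "W j n (\<lambda>y. if P then F y else (0::'f::ab_group_add)) = (\<lambda>x. if P then W j n F x else 0)"
  by (cases P) (simp_all add: W_zero)

lemma WD_sum0:
  "(\<And>i. i \<in> I \<Longrightarrow> W k n (Deltas hs (F i)) x = 0) \<Longrightarrow> W k n (Deltas hs (\<lambda>y. \<Sum>i\<in>I. F i y)) x = (0::'f::ab_group_add)"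
  by (simp add: Deltas_sum W_sum)
lemma WD_scale0:
  "W k n (Deltas hs F) x = 0 \<Longrightarrow> W k n (Deltas hs (\<lambda>y. (a::'f::ring) * F y)) x = 0"
  by (simp add: Deltas_scale W_scale)
lemma WD_if0:
  "(P \<Longrightarrow> W k n (Deltas hs F) x = 0) \<Longrightarrow> W k n (Deltas hs (\<lambda>y. if P then F y else 0)) x = (0::'f::ab_group_add)"
  by (simp add: Deltas_if W_if)

lemma Pm_0:
  fixes \<psi> :: "(nat \<times> nat \<Rightarrow> 'f::field) list \<Rightarrow> (nat \<times> nat \<Rightarrow> 'f) \<Rightarrow> 'f"
  assumes "1 \<le> k"
  shows "Pm k n 0 \<psi> y = \<psi> [] y"
proof -
  have L: "Lc k (\<lambda>_. 0) = []" using set_Lc[of k "\<lambda>_. 0"] by simp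
  have w: "wt k (\<lambda>_. 0) = (1::'f)" by (simp add: wt_def)
  show ?thesis unfolding Pm_def Cset_0 using L w by simp
qed

lemma core:
  fixes \<psi> :: "(nat \<times> nat \<Rightarrow> 'f::field) list \<Rightarrow> (nat \<times> nat \<Rightarrow> 'f) \<Rightarrow> 'f"
  assumes k: "1 \<le> k"
  shows "multilinear_form k n (Suc m) \<psi> \<Longrightarrow> symH k n m \<psi> \<Longrightarrow> swapH k n m \<psi> \<Longrightarrow>
    (\<And>t. 0 < t \<Longrightarrow> t \<le> Suc m \<Longrightarrow> of_nat t \<noteq> (0::'f)) \<Longrightarrow>
    set as \<subseteq> Gsum k n \<Longrightarrow> length as = m \<Longrightarrow> x \<in> Gsum k n \<Longrightarrow>
    W k n (Deltas as (Pm k n m \<psi>)) x = \<psi> as x"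
proof (induction m arbitrary: \<psi> as x)
  case 0
  then have as: "as = []" by simp
  have "Pm k n 0 \<psi> = \<psi> []" by (rule ext) (rule Pm_0[OF k])
  then have "W k n (Deltas as (Pm k n 0 \<psi>)) x = W k n (\<psi> []) x" using as by simp
  also have "\<dots> = \<psi> [] x"
  proof (rule W_fixed)
    fix j z assume "j < k" "(z :: nat \<times> nat \<Rightarrow> 'f) \<in> Gsum k n"
    then show "\<psi> [] (setcomp n z j 0) = 0" using ml_d_zero[OF "0.prems"(1), of "[]"] by simp
  qed (use "0.prems" in auto)
  finally show ?case using as by simp
next
  case (Suc m)
  obtain as' b where as: "as = as' @ [b]" using Suc.prems(6) by (cases as rule: rev_cases) auto
  have b: "b \<in> Gsum k n" and as': "set as' \<subseteq> Gsum k n" and las': "length as' = m"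
    using Suc.prems(5,6) as by auto
  have x: "x \<in> Gsum k n" by (rule Suc.prems(7))
  note ml = Suc.prems(1) and sy = Suc.prems(2) and sw = Suc.prems(3)
  have ch: "\<And>t. 0 < t \<Longrightarrow> t \<le> Suc (Suc m) \<Longrightarrow> of_nat t \<noteq> (0::'f)" by (rule Suc.prems(4))
  let ?\<psi>b = "\<lambda>a. \<psi> (a @ [b])"
  have IH: "W k n (Deltas as' (Pm k n m ?\<psi>b)) x = ?\<psi>b as' x"
    by (rule Suc.IH[OF ml_b[OF ml b] sym_b[OF sy b] swap_b[OF sw b] _ as' las' x])
      (use ch in auto)
  let ?J1 = "J1 k n (Suc m) \<psi> b" and ?J2 = "J2 k n (Suc m) \<psi> b"
  have dec: "Delta b (Pm k n (Suc m) \<psi>) y = Pm k n m ?\<psi>b y + ?J1 y + ?J2 y" if y: "y \<in> Gsum k n" for y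
    by (rule decomp[OF ml sy sw refl y b ch])
  have "W k n (Deltas as (Pm k n (Suc m) \<psi>)) x = W k n (Deltas as' (Delta b (Pm k n (Suc m) \<psi>))) x"
    unfolding as Deltas_snoc ..
  also have "\<dots> = W k n (Deltas as' (\<lambda>y. Pm k n m ?\<psi>b y + ?J1 y + ?J2 y)) x"
    by (rule W_cong[OF _ x], rule Deltas_cong[OF as']) (simp_all add: dec)
  also have "\<dots> = W k n (Deltas as' (Pm k n m ?\<psi>b)) x + W k n (Deltas as' ?J1) x + W k n (Deltas as' ?J2) x"
    by (simp add: Deltas_add W_add)
  also have "W k n (Deltas as' ?J1) x = 0"
  proof -
    have "W k n (Deltas as' ?J1) x = Deltas (Lx n k x) (Deltas as' ?J1) (zb n k x)"
      by (rule W_Deltas[OF x])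
    also have "\<dots> = Deltas (Lx n k x @ as') ?J1 (zb n k x)" by (simp add: Deltas_append)
    also have "\<dots> = 0"
    proof -
      have "set (Lx n k x) \<subseteq> Gsum k n" by (rule Lx_in) simp
      then have "set (Lx n k x @ as') \<subseteq> Gsum k n" using as' by simp
      moreover have "zb n k x \<in> Gsum k n" by (rule zb_in[OF x])
      moreover have "Suc m + k - 2 < length (Lx n k x @ as')" using las' k by simp
      ultimately show ?thesis using J1_deg[OF ml sy sw b] unfolding deg_le_def by blast
    qed
    finally show ?thesis .
  qed
  also have "W k n (Deltas as' ?J2) x = 0"
  proof -
    have "?J2 = (\<lambda>y. \<Sum>c\<in>Cset k (Suc m). wt k c * (\<Sum>j<k.
            if c j = 0 then \<psi> (map (\<lambda>j. pr n j y) (Lc k c)) (setcomp n y j (comp b j)) else 0))"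
      by (rule ext) (rule J2_def[OF ml sy sw])
    moreover have "W k n (Deltas as' (\<lambda>y. \<Sum>c\<in>Cset k (Suc m). wt k c * (\<Sum>j<k.
            if c j = 0 then \<psi> (map (\<lambda>j. pr n j y) (Lc k c)) (setcomp n y j (comp b j)) else 0))) x = 0"
    proof (rule WD_sum0, rule WD_scale0, rule WD_sum0, rule WD_if0)
      fix c j assume c: "c \<in> Cset k (Suc m)" and j: "j \<in> {..<k}" and cj: "c j = 0"
      have "indep k n j (Deltas as' (\<lambda>y. \<psi> (map (\<lambda>j. pr n j y) (Lc k c)) (setcomp n y j (comp b j))))"
        by (rule indep_Deltas[OF as' J2_term_indep[OF ml sy sw c cj]])
      then show "W k n (Deltas as' (\<lambda>y. \<psi> (map (\<lambda>j. pr n j y) (Lc k c)) (setcomp n y j (comp b j)))) x = 0"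
        by (rule W_indep_zero) (use j x in auto)
    qed
    ultimately show ?thesis by simp
  qed
  finally show ?case using IH as by simp
qed


theorem proposition30:
  fixes p k r :: nat and n :: "nat \<Rightarrow> nat"
    and \<psi> :: "(nat \<times> nat \<Rightarrow> 'f::{finite, field}) list \<Rightarrow> (nat \<times> nat \<Rightarrow> 'f) \<Rightarrow> 'f"
  assumes "prime p" and "card (UNIV :: 'f set) = p"
    and "k \<ge> 1" and "r \<ge> 1" and "p \<ge> r + 1"
    and "multilinear_form k n r \<psi>"
    and sym: "\<And>a d i j. set a \<subseteq> Gsum k n \<Longrightarrow> length a = r - 1 \<Longrightarrow> d \<in> Gsum k n \<Longrightarrow>
               i < j \<Longrightarrow> j < r - 1 \<Longrightarrow> \<psi> (a[i := a ! j, j := a ! i]) d = \<psi> a d"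
    and swap: "\<And>a d i j u. set a \<subseteq> Gsum k n \<Longrightarrow> length a = r - 1 \<Longrightarrow> d \<in> Gsum k n \<Longrightarrow>
               i < r - 1 \<Longrightarrow> j < k \<Longrightarrow> u \<in> Gcomp n j \<Longrightarrow>
               \<psi> (a[i := iota n j u]) d = \<psi> (a[i := iota n j (comp d j)]) (setcomp n d j u)"
  shows "\<exists>P Q. in_Pkr k n r P \<and> is_poly Q
           \<and> (\<forall>m. Q m \<noteq> 0 \<longrightarrow> (\<forall>v\<in>#m. Qvar_ok k n r v) \<and> (\<exists>i<k. \<forall>c. Inr (i, c) \<notin># m))
           \<and> (\<forall>a x. set a \<subseteq> Gsum k n \<and> length a = r - 1 \<and> x \<in> Gsum k n \<longrightarrow>
                \<psi> a x = Deltas a (poly_eval P) x + poly_eval Q (Qassign a x))"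
proof -
  define m where "m = r - 1"
  have r: "r = Suc m" using assms(4) by (simp add: m_def)
  have ml: "multilinear_form k n (Suc m) \<psi>" using assms(6) r by simp
  have sy: "symH k n m \<psi>" using sym unfolding symH_def m_def by blast
  have sw: "swapH k n m \<psi>" using swap unfolding swapH_def m_def by blast
  have ch: "\<And>t. 0 < t \<Longrightarrow> t \<le> Suc m \<Longrightarrow> of_nat t \<noteq> (0::'f)"
    using of_nat_nonzero_field[OF assms(1,2)] assms(5) r by auto
  have k: "1 \<le> k" using assms(3) by simp

  define MsP where "MsP = {M :: (nat \<times> nat) multiset. size M = m + k \<and> set_mset M \<subseteq> idx k n \<and> (\<forall>i<k. \<exists>c. (i, c) \<in># M)}"
  have polyP: "polyD (Gsum k n) MsP (Pm k n m \<psi>)"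
  proof -
    have termc: "polyD (Gsum k n) MsP (\<lambda>y. Tc k n m c \<psi> (\<lambda>i. y))" if c: "c \<in> Cset k m" for c
    proof -
      let ?S = "{..<m + k}"
      have mlT: "mlin k n ?S (Tc k n m c \<psi>)" by (rule Tc_mlin[OF c ml])
      have eq: "Tc k n m c \<psi> (\<lambda>i. y) = (\<Sum>vs\<in>VS k n ?S. Tc k n m c \<psi> (\<lambda>i. ebasis (vs i))
          * prod_mset (image_mset y (image_mset vs (mset_set ?S))))" if y: "y \<in> Gsum k n" for y
      proof -
        have "Tc k n m c \<psi> (\<lambda>i. y) = (\<Sum>vs\<in>VS k n ?S. (\<Prod>i\<in>?S. y (vs i)) * Tc k n m c \<psi> (\<lambda>i. ebasis (vs i)))"
          by (rule expand[OF _ mlT]) (simp_all add: y)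
        also have "\<dots> = (\<Sum>vs\<in>VS k n ?S. Tc k n m c \<psi> (\<lambda>i. ebasis (vs i))
          * prod_mset (image_mset y (image_mset vs (mset_set ?S))))"
        proof (rule sum.cong[OF refl])
          fix vs :: "nat \<Rightarrow> nat \<times> nat"
          have "prod_mset (image_mset y (image_mset vs (mset_set ?S))) = prod_mset (image_mset (\<lambda>i. y (vs i)) (mset_set ?S))"
            by (simp add: image_mset.compositionality o_def)
          also have "\<dots> = (\<Prod>i\<in>?S. y (vs i))" by (rule prod_unfold_prod_mset[symmetric])
          finally show "(\<Prod>i\<in>?S. y (vs i)) * Tc k n m c \<psi> (\<lambda>i. ebasis (vs i)) =
              Tc k n m c \<psi> (\<lambda>i. ebasis (vs i)) * prod_mset (image_mset y (image_mset vs (mset_set ?S)))"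
            by (simp add: mult.commute)
        qed
        finally show ?thesis .
      qed
      have "polyD (Gsum k n) MsP (\<lambda>y. \<Sum>vs\<in>VS k n ?S. Tc k n m c \<psi> (\<lambda>i. ebasis (vs i))
          * prod_mset (image_mset y (image_mset vs (mset_set ?S))))"
      proof (rule poly_terms[OF finite_VS[OF finite_lessThan]])
        fix vs assume vs: "vs \<in> VS k n ?S" and nz: "Tc k n m c \<psi> (\<lambda>i. ebasis (vs i)) \<noteq> 0"
        have vsi: "vs i \<in> idx k n" if "i \<in> ?S" for i using vs that by (simp add: VS_def)
        have "size (image_mset vs (mset_set ?S)) = m + k" by simp
        moreover have "set_mset (image_mset vs (mset_set ?S)) \<subseteq> idx k n" using vsi by auto
        moreover have "\<exists>c'. (i, c') \<in># image_mset vs (mset_set ?S)" if i: "i < k" for i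
        proof -
          have mi: "m + i \<in> ?S" using i by simp
          have fst_eq: "fst (vs (m + i)) = i"
          proof (rule ccontr)
            assume ne: "fst (vs (m + i)) \<noteq> i"
            let ?zs = "\<lambda>j. ebasis (vs (m + j)) :: nat \<times> nat \<Rightarrow> 'f"
            have c0: "comp (?zs i) i = 0" using ne by (cases "vs (m + i)") (auto simp: comp_def ebasis_def fun_eq_iff)
            have "dmk k n ?zs = dmk k n (?zs(i := ?zs i))" by (rule arg_cong[where f = "dmk k n"]) (rule ext, simp)
            also have "\<dots> = setcomp n (dmk k n ?zs) i 0" unfolding dmk_upd[OF i] c0 ..
            finally have dz: "dmk k n ?zs = setcomp n (dmk k n ?zs) i 0" .
            have "Tc k n m c \<psi> (\<lambda>i. ebasis (vs i)) = \<psi> (map (\<lambda>i'. pr n (Lc k c ! i') (ebasis (vs i'))) [0..<m]) (dmk k n ?zs)"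
              unfolding Tc_def ..
            also have "\<dots> = \<psi> (map (\<lambda>i'. pr n (Lc k c ! i') (ebasis (vs i'))) [0..<m]) (setcomp n (dmk k n ?zs) i 0)"
              using dz by (rule arg_cong)
            also have "\<dots> = 0"
              by (rule ml_d_zero[OF ml Tc_list_in[OF c] _ dmk_in i]) simp
            finally show False using nz by simp
          qed
          have "vs (m + i) \<in># image_mset vs (mset_set ?S)" using mi by simp
          then show ?thesis using fst_eq by (metis prod.collapse)
        qed
        ultimately show "image_mset vs (mset_set ?S) \<in> MsP" unfolding MsP_def by blast
      qed
      then show ?thesis by (rule polyD_cong) (simp add: eq)
    qed
    have "polyD (Gsum k n) MsP (\<lambda>y. \<Sum>c\<in>Cset k m. wt k c * Tc k n m c \<psi> (\<lambda>i. y))"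
      by (rule polyD_sum[OF finite_Cset]) (rule polyD_scale[OF termc])
    then show ?thesis by (rule polyD_cong) (simp add: Pm_Tc[OF ml sy sw])
  qed
  obtain P where P: "is_poly P" "\<forall>M. P M \<noteq> 0 \<longrightarrow> M \<in> MsP" "\<forall>y\<in>Gsum k n. Pm k n m \<psi> y = poly_eval P y"
    using polyP unfolding polyD_def by blast
  have inP: "in_Pkr k n r P" unfolding in_Pkr_def using P(1,2) r by (auto simp: MsP_def)

  define R where "R a z = \<psi> a z - Deltas a (poly_eval P) z" for a z
  define aof where "aof yv = map (\<lambda>l. (\<lambda>(j, c). if (j, c) \<in> idx k n then yv (Inl (l, j, c)) else 0)) [0..<m]"
    for yv :: "(nat \<times> nat \<times> nat) + (nat \<times> nat) \<Rightarrow> 'f"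
  define xof where "xof yv = (\<lambda>(j, c). if (j, c) \<in> idx k n then yv (Inr (j, c)) else 0)"
    for yv :: "(nat \<times> nat \<times> nat) + (nat \<times> nat) \<Rightarrow> 'f"
  define g where "g j yv = W j n (R (aof yv)) (setcomp n (xof yv) j 0)" for j yv
  define Sj where "Sj j = (\<lambda>(l, v). Inl (l, fst v, snd v)) ` ({..<m} \<times> idx k n) \<union> Inr ` {v \<in> idx k n. fst v \<noteq> j}"
    for j :: nat
  define MsQ where "MsQ = {M. (\<forall>v\<in>#M. Qvar_ok k n r v) \<and> (\<exists>i<k. \<forall>c. Inr (i, c) \<notin># M)}"
  have polyg: "polyD UNIV MsQ (g j)" if j: "j < k" for j
  proof -
    have fin: "finite (Sj j)" unfolding Sj_def using finite_idx by auto
    have dep: "g j yv = g j yv'" if agree: "\<And>v. v \<in> Sj j \<Longrightarrow> yv v = yv' v" for yv yv'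
    proof -
      have inl: "yv (Inl (l, j', c)) = yv' (Inl (l, j', c))" if "l < m" "(j', c) \<in> idx k n" for l j' c
      proof (rule agree)
        have "(l, (j', c)) \<in> {..<m} \<times> idx k n" using that by simp
        then show "Inl (l, j', c) \<in> Sj j" unfolding Sj_def by (intro UnI1 rev_image_eqI) auto
      qed
      have inr: "yv (Inr (j', c)) = yv' (Inr (j', c))" if "j' \<noteq> j" "(j', c) \<in> idx k n" for j' c
        by (rule agree) (use that in \<open>auto simp: Sj_def\<close>)
      have "aof yv = aof yv'" unfolding aof_def
        by (rule map_cong[OF refl]) (auto simp: fun_eq_iff inl)
      moreover have "setcomp n (xof yv) j 0 = setcomp n (xof yv') j 0"
        by (auto simp: setcomp_def xof_def fun_eq_iff inr)
      ultimately show ?thesis unfolding g_def by simp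
    qed
    have "polyD UNIV {M. set_mset M \<subseteq> Sj j} (g j)" by (rule interp[OF fin dep]) blast
    moreover have "{M. set_mset M \<subseteq> Sj j} \<subseteq> MsQ"
    proof
      fix M assume M: "M \<in> {M. set_mset M \<subseteq> Sj j}"
      have "Qvar_ok k n r v" if "v \<in># M" for v
        using M that r by (auto simp: Sj_def Qvar_ok_def)
      moreover have "\<forall>c. Inr (j, c) \<notin># M" using M by (auto simp: Sj_def)
      ultimately show "M \<in> MsQ" unfolding MsQ_def using j by blast
    qed
    ultimately show ?thesis by (rule polyD_mono)
  qed
  have "polyD UNIV MsQ (\<lambda>yv. \<Sum>j<k. g j yv)" by (rule polyD_sum) (simp_all add: polyg)
  then obtain Q where Q: "is_poly Q" "\<forall>M. Q M \<noteq> 0 \<longrightarrow> M \<in> MsQ" "\<forall>yv. (\<Sum>j<k. g j yv) = poly_eval Q yv"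
    unfolding polyD_def by auto
  have main: "\<psi> a x = Deltas a (poly_eval P) x + poly_eval Q (Qassign a x)"
    if h: "set a \<subseteq> Gsum k n" "length a = r - 1" "x \<in> Gsum k n" for a x
  proof -
    have la: "length a = m" using h(2) by (simp add: m_def)
    have aq: "aof (Qassign a x) = a"
    proof (rule nth_equalityI)
      show "length (aof (Qassign a x)) = length a" using la by (simp add: aof_def)
      fix l assume l: "l < length (aof (Qassign a x))"
      then have lm: "l < m" by (simp add: aof_def)
      have "a ! l \<in> Gsum k n" using h(1) lm la by (auto dest: nth_mem)
      then show "aof (Qassign a x) ! l = a ! l"
        using lm by (auto simp: aof_def Qassign_def fun_eq_iff Gsum_def)
    qed
    have xq: "xof (Qassign a x) = x" using h(3) by (auto simp: xof_def Qassign_def fun_eq_iff Gsum_def)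
    have Ra: "R a = (\<lambda>z. \<psi> a z - Deltas a (poly_eval P) z)" by (rule ext) (simp add: R_def)
    have W1: "W k n (\<psi> a) x = \<psi> a x"
    proof (rule W_fixed)
      fix j z assume "j < k" "(z :: nat \<times> nat \<Rightarrow> 'f) \<in> Gsum k n"
      then show "\<psi> a (setcomp n z j 0) = 0" using ml_d_zero[OF ml h(1)] la by simp
    qed (use h in auto)
    have W2: "W k n (Deltas a (poly_eval P)) x = \<psi> a x"
    proof -
      have "W k n (Deltas a (poly_eval P)) x = W k n (Deltas a (Pm k n m \<psi>)) x"
        by (rule W_cong[OF _ h(3)], rule Deltas_cong[OF h(1)]) (simp_all add: P(3))
      also have "\<dots> = \<psi> a x" by (rule core[OF k ml sy sw ch h(1) la h(3)])
      finally show ?thesis .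
    qed
    have WR: "W k n (R a) x = 0" unfolding Ra W_diff using W1 W2 by simp
    have "poly_eval Q (Qassign a x) = (\<Sum>j<k. g j (Qassign a x))" using Q(3) by simp
    also have "\<dots> = (\<Sum>j<k. W j n (R a) (setcomp n x j 0))" unfolding g_def aq xq ..
    also have "\<dots> = R a x" using W_decomp[of "R a" x k n] WR by simp
    finally show ?thesis by (simp add: R_def)
  qed
  show ?thesis
  proof (rule exI[of _ P], rule exI[of _ Q], intro conjI)
    show "in_Pkr k n r P" by (rule inP)
    show "is_poly Q" by (rule Q(1))
    show "\<forall>M. Q M \<noteq> 0 \<longrightarrow> (\<forall>v\<in>#M. Qvar_ok k n r v) \<and> (\<exists>i<k. \<forall>c. Inr (i, c) \<notin># M)"
      using Q(2) unfolding MsQ_def by blast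
    show "\<forall>a x. set a \<subseteq> Gsum k n \<and> length a = r - 1 \<and> x \<in> Gsum k n \<longrightarrow>
        \<psi> a x = Deltas a (poly_eval P) x + poly_eval Q (Qassign a x)"
      using main by blast
  qed
qed

end
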